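(* Let $H$ be a separable complex Hilbert space, $(\Omega,\mu)$ a measure space with positive measure, let $K\in B(H)$ have closed range, and let $F:\Omega\to H$ be a Parseval continuous $K$-frame of $H$ with a dual continuous $K$-Bessel sequence $G$. Then $G$ is the canonical dual continuous $K$-Bessel sequence $K^{\dagger}F$ of $F$ if and only if $T_G^{\ast}T_G=T_G^{\ast}T_{Q}$ for every dual continuous $K$-Bessel sequence $Q$ of $F$, where $T_G$ and $T_Q$ denote the analysis operators of $G$ and $Q$.
   Context: A map $F:\Omega\to H$ is weakly measurable if $\omega\mapsto\langle f,F(\omega)\rangle$ is measurable for every $f\in H$. A continuous Bessel sequence is a weakly measurable $G$ with $\int_\Omega|\langle f,G(\omega)\rangle|^2\,d\mu(\omega)\le B\|f\|^2$ for all $f\in H$, for some $B>0$; its analysis operator is $T_G:H\to L^2(\Omega,\mu)$, $T_Gf=\{\langle f,G(\omega)\rangle\}_{\omega}$. A Parseval continuous $K$-frame is a weakly measurable $F$ with $\int_\Omega|\langle f,F(\omega)\rangle|^2\,d\mu(\omega)=\|K^{\ast}f\|^2$ for all $f\in H$. A dual continuous $K$-Bessel sequence of $F$ is a continuous Bessel sequence $G$ with $Kf=\int_\Omega\langle f,G(\omega)\rangle F(\omega)\,d\mu(\omega)$ for all $f\in H$. $K^{\dagger}$ is the Moore–Penrose pseudo-inverse of $K$; the canonical dual continuous $K$-Bessel sequence of $F$ is $K^{\dagger}F$, which is a dual continuous $K$-Bessel sequence of $F$ whose analysis operator has minimal norm among all such duals. (The paper uses the letter $H$ both for the Hilbert space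 and for the arbitrary dual; here the arbitrary dual is called $Q$.) *)

theory Defs
  imports "HOL-Analysis.Analysis" "HOL-Probability.Probability"
begin

class complex_inner_space = real_normed_vector +
  fixes scaleC :: "complex \<Rightarrow> 'a \<Rightarrow> 'a"
    and cinner :: "'a \<Rightarrow> 'a \<Rightarrow> complex"
  assumes scaleC_add_right: "scaleC c (x + y) = scaleC c x + scaleC c y"
    and scaleC_add_left: "scaleC (c + d) x = scaleC c x + scaleC d x"
    and scaleC_scaleC: "scaleC c (scaleC d x) = scaleC (c * d) x"
    and scaleC_one: "scaleC 1 x = x"
    and scaleR_scaleC: "scaleR r x = scaleC (complex_of_real r) x"
    and cinner_add_left: "cinner (x + y) z = cinner x z + cinner y z"
    and cinner_scaleC_left: "cinner (scaleC c x) y = c * cinner x y"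
    and cinner_commute: "cinner y x = cnj (cinner x y)"
    and cinner_self_norm: "cinner x x = complex_of_real ((norm x)\<^sup>2)"

class complex_hilbert_space = complex_inner_space + complete_space

definition separable_hilbert :: "'h::complex_hilbert_space itself \<Rightarrow> bool" where
  "separable_hilbert _ \<longleftrightarrow> separable_space (euclidean :: 'h topology)"

definition bounded_clinear :: "('h::complex_inner_space \<Rightarrow> 'k::complex_inner_space) \<Rightarrow> bool" where
  "bounded_clinear T \<longleftrightarrow>
     (\<forall>x y. T (x + y) = T x + T y) \<and> (\<forall>c x. T (scaleC c x) = scaleC c (T x)) \<and>
     (\<exists>C. \<forall>x. norm (T x) \<le> norm x * C)"

definition cadjoint :: "('h::complex_inner_space \<Rightarrow> 'h) \<Rightarrow> ('h \<Rightarrow> 'h)" where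
  "cadjoint T = (SOME S. \<forall>x y. cinner (T x) y = cinner x (S y))"

definition selfadjoint_op :: "('h::complex_inner_space \<Rightarrow> 'h) \<Rightarrow> bool" where
  "selfadjoint_op P \<longleftrightarrow> (\<forall>x y. cinner (P x) y = cinner x (P y))"

definition moore_penrose :: "('h::complex_hilbert_space \<Rightarrow> 'h) \<Rightarrow> ('h \<Rightarrow> 'h)" where
  "moore_penrose K = (THE Kd. bounded_clinear Kd \<and>
      K \<circ> Kd \<circ> K = K \<and> Kd \<circ> K \<circ> Kd = Kd \<and>
      selfadjoint_op (K \<circ> Kd) \<and> selfadjoint_op (Kd \<circ> K))"

definition weakly_measurable :: "'o measure \<Rightarrow> ('o \<Rightarrow> 'h::complex_inner_space) \<Rightarrow> bool" where
  "weakly_measurable M F \<longleftrightarrow> (\<forall>f. (\<lambda>\<omega>. cinner f (F \<omega>)) \<in> borel_measurable M)"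

definition cont_bessel :: "'o measure \<Rightarrow> ('o \<Rightarrow> 'h::complex_inner_space) \<Rightarrow> bool" where
  "cont_bessel M G \<longleftrightarrow> weakly_measurable M G \<and>
     (\<exists>B>0. \<forall>f. (\<integral>\<^sup>+\<omega>. ennreal ((cmod (cinner f (G \<omega>)))\<^sup>2) \<partial>M) \<le> ennreal (B * (norm f)\<^sup>2))"

definition parseval_cont_K_frame ::
    "'o measure \<Rightarrow> ('h::complex_inner_space \<Rightarrow> 'h) \<Rightarrow> ('o \<Rightarrow> 'h) \<Rightarrow> bool" where
  "parseval_cont_K_frame M K F \<longleftrightarrow> weakly_measurable M F \<and>
     (\<forall>f. (\<integral>\<^sup>+\<omega>. ennreal ((cmod (cinner f (F \<omega>)))\<^sup>2) \<partial>M) = ennreal ((norm (cadjoint K f))\<^sup>2))"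

text \<open>G is a dual continuous K-Bessel sequence of F:
  K f = \<integral> <f, G w> F w d\<mu>(w), the integral taken in the weak sense.\<close>
definition dual_cont_K_bessel ::
    "'o measure \<Rightarrow> ('h::complex_inner_space \<Rightarrow> 'h) \<Rightarrow> ('o \<Rightarrow> 'h) \<Rightarrow> ('o \<Rightarrow> 'h) \<Rightarrow> bool" where
  "dual_cont_K_bessel M K F G \<longleftrightarrow> cont_bessel M G \<and>
     (\<forall>f h. cinner (K f) h = (LINT \<omega>|M. cinner f (G \<omega>) * cinner (F \<omega>) h))"

text \<open>Inner product of L^2(\<Omega>,\<mu>) (on representatives).\<close>
definition l2_inner :: "'o measure \<Rightarrow> ('o \<Rightarrow> complex) \<Rightarrow> ('o \<Rightarrow> complex) \<Rightarrow> complex" where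
  "l2_inner M u v = (LINT \<omega>|M. u \<omega> * cnj (v \<omega>))"

definition analysis_op :: "('o \<Rightarrow> 'h::complex_inner_space) \<Rightarrow> 'h \<Rightarrow> ('o \<Rightarrow> complex)" where
  "analysis_op G f = (\<lambda>\<omega>. cinner f (G \<omega>))"

definition analysis_adj :: "'o measure \<Rightarrow> ('o \<Rightarrow> 'h::complex_inner_space) \<Rightarrow> ('o \<Rightarrow> complex) \<Rightarrow> 'h" where
  "analysis_adj M G u = (THE x. \<forall>h. cinner x h = l2_inner M u (analysis_op G h))"

end

theory Submission
  imports Defs
begin

subclass (in complex_hilbert_space) banach ..


lemma cinner_add_right: "cinner x (y + z) = cinner x y + cinner x z"
  by (metis cinner_commute cinner_add_left complex_cnj_add)

lemma cinner_scaleC_right: "cinner x (scaleC c y) = cnj c * cinner x y"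
  by (metis cinner_commute cinner_scaleC_left complex_cnj_mult complex_cnj_cnj)

lemma cinner_zero_left [simp]: "cinner 0 y = 0"
  using cinner_add_left[of 0 0 y] by simp

lemma cinner_zero_right [simp]: "cinner x 0 = 0"
  using cinner_add_right[of x 0 0] by simp

lemma scaleC_real: "scaleC (complex_of_real r) (x::'a::complex_inner_space) = scaleR r x"
  by (simp add: scaleR_scaleC)

lemma scaleC_minus1: "scaleC (-1) (x::'a::complex_inner_space) = - x"
proof -
  have "- x = scaleR (-1) x" by simp
  also have "\<dots> = scaleC (complex_of_real (-1)) x" by (rule scaleR_scaleC)
  finally show ?thesis by simp
qed

lemma cinner_minus_left: "cinner (- x) y = - cinner x y"
  using cinner_scaleC_left[of "-1" x y] by (simp add: scaleC_minus1)

lemma cinner_minus_right: "cinner x (- y) = - cinner x y"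
  using cinner_scaleC_right[of x "-1" y] by (simp add: scaleC_minus1)

lemma cinner_diff_left: "cinner (x - y) z = cinner x z - cinner y z"
  using cinner_add_left[of x "-y" z] by (simp add: cinner_minus_left)

lemma cinner_diff_right: "cinner x (y - z) = cinner x y - cinner x z"
  using cinner_add_right[of x y "-z"] by (simp add: cinner_minus_right)

lemma scaleC_zero_right [simp]: "scaleC c 0 = 0"
  using scaleC_add_right[of c 0 0] by simp

lemma scaleC_zero_left [simp]: "scaleC 0 x = 0"
  using scaleC_add_left[of 0 0 x] by simp

lemma cinner_self_re: "Re (cinner x x) = (norm x)\<^sup>2"
  by (simp add: cinner_self_norm)

lemma cinner_self_im: "Im (cinner x x) = 0"
  by (simp add: cinner_self_norm)

lemma cinner_eq_zero_iff: "cinner x x = 0 \<longleftrightarrow> x = 0"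
  by (simp add: cinner_self_norm)

lemma norm_scaleC: "norm (scaleC c x) = cmod c * norm x"
proof -
  have "complex_of_real ((norm (scaleC c x))\<^sup>2) = c * cnj c * complex_of_real ((norm x)\<^sup>2)"
    by (metis cinner_self_norm cinner_scaleC_left cinner_scaleC_right mult.assoc)
  also have "c * cnj c = complex_of_real ((cmod c)\<^sup>2)"
    by (rule complex_norm_square[symmetric])
  finally have "(norm (scaleC c x))\<^sup>2 = (cmod c * norm x)\<^sup>2"
    by (metis of_real_eq_iff of_real_mult power_mult_distrib)
  then show ?thesis
    by (simp add: power2_eq_iff_nonneg)
qed

lemma cinner_ext: "(\<And>y. cinner x y = cinner x' y) \<Longrightarrow> x = x'"
proof -
  assume h: "\<And>y. cinner x y = cinner x' y"
  have "cinner (x - x') (x - x') = 0" using h by (simp add: cinner_diff_left)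
  then show ?thesis by (simp add: cinner_eq_zero_iff)
qed

lemma cinner_ext_right: "(\<And>y. cinner y x = cinner y x') \<Longrightarrow> x = x'"
  by (rule cinner_ext) (metis cinner_commute)

lemma norm_sq_add: "(norm (x + y))\<^sup>2 = (norm x)\<^sup>2 + (norm y)\<^sup>2 + 2 * Re (cinner x y)"
proof -
  have "cinner (x + y) (x + y) = cinner x x + cinner y y + (cinner x y + cinner y x)"
    by (simp add: cinner_add_left cinner_add_right algebra_simps)
  then have "complex_of_real ((norm (x + y))\<^sup>2) = cinner x x + cinner y y + (cinner x y + cinner y x)"
    by (simp only: cinner_self_norm)
  also have "cinner x y + cinner y x = complex_of_real (2 * Re (cinner x y))"
    by (metis cinner_commute complex_add_cnj)
  finally have "complex_of_real ((norm (x + y))\<^sup>2) = complex_of_real ((norm x)\<^sup>2) + complex_of_real ((norm y)\<^sup>2) + complex_of_real (2 * Re (cinner x y))"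
    by (simp only: cinner_self_norm)
  then have "complex_of_real ((norm (x + y))\<^sup>2) = complex_of_real ((norm x)\<^sup>2 + (norm y)\<^sup>2 + 2 * Re (cinner x y))"
    by (simp only: of_real_add)
  then show ?thesis by (simp only: of_real_eq_iff)
qed

lemma pythagoras: "cinner x y = 0 \<Longrightarrow> (norm (x + y))\<^sup>2 = (norm x)\<^sup>2 + (norm y)\<^sup>2"
  by (simp add: norm_sq_add)

lemma norm_sq_diff: "(norm (x - y))\<^sup>2 = (norm x)\<^sup>2 + (norm y)\<^sup>2 - 2 * Re (cinner x y)"
  using norm_sq_add[of x "-y"] by (simp add: cinner_minus_right)

lemma parallelogram: "(norm ((x::'a::complex_inner_space) + y))\<^sup>2 + (norm (x - y))\<^sup>2 = 2 * (norm x)\<^sup>2 + 2 * (norm y)\<^sup>2"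
  using norm_sq_add[of x y] norm_sq_diff[of x y] by linarith

lemma norm_sq_sub_component:
  assumes "y \<noteq> 0"
  shows "(norm (x - scaleC (cinner x y / complex_of_real ((norm y)\<^sup>2)) y))\<^sup>2
         = (norm x)\<^sup>2 - (cmod (cinner x y))\<^sup>2 / (norm y)\<^sup>2"
proof -
  define t where "t = cinner x y / complex_of_real ((norm y)\<^sup>2)"
  have ny: "(norm y)\<^sup>2 \<noteq> 0" using assms by simp
  have "cinner (x - scaleC t y) (x - scaleC t y) =
      cinner x x - cnj t * cinner x y - t * cinner y x + t * cnj t * cinner y y"
    by (simp add: cinner_diff_left cinner_diff_right
        cinner_scaleC_left cinner_scaleC_right algebra_simps)
  then have "complex_of_real ((norm (x - scaleC t y))\<^sup>2) =
      cinner x x - cnj t * cinner x y - t * cinner y x + t * cnj t * cinner y y"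
    by (simp only: cinner_self_norm)
  also have "\<dots> = cinner x x - cinner x y * cnj (cinner x y) / complex_of_real ((norm y)\<^sup>2)"
  proof -
    define a where "a = cinner x y"
    define n where "n = complex_of_real ((norm y)\<^sup>2)"
    have n0: "n \<noteq> 0" using ny by (simp add: n_def)
    have ct: "cnj t = cnj a / n" by (simp add: t_def a_def n_def)
    have yx: "cinner y x = cnj a" by (simp add: a_def cinner_commute[of y x])
    have yy: "cinner y y = n" by (simp add: n_def cinner_self_norm)
    have tt: "t = a / n" by (simp add: t_def a_def n_def)
    have "cinner x x - cnj t * a - t * cnj a + t * cnj t * n = cinner x x - a * cnj a / n"
      unfolding ct tt using n0 by (simp add: field_simps power2_eq_square)
    then show ?thesis using yx yy by (simp add: a_def n_def)
  qed
  also have "cinner x y * cnj (cinner x y) = complex_of_real ((cmod (cinner x y))\<^sup>2)"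
    by (rule complex_norm_square[symmetric])
  finally have "complex_of_real ((norm (x - scaleC t y))\<^sup>2) =
     complex_of_real ((norm x)\<^sup>2 - (cmod (cinner x y))\<^sup>2 / (norm y)\<^sup>2)"
    by (simp add: cinner_self_norm)
  then show ?thesis unfolding t_def by (simp only: of_real_eq_iff)
qed

lemma cauchy_schwarz: "cmod (cinner x y) \<le> norm x * norm y"
proof (cases "y = 0")
  case True then show ?thesis by simp
next
  case False
  have "0 \<le> (norm x)\<^sup>2 - (cmod (cinner x y))\<^sup>2 / (norm y)\<^sup>2"
    using norm_sq_sub_component[OF False, of x] by (metis zero_le_power2)
  then have "(cmod (cinner x y))\<^sup>2 \<le> (norm x * norm y)\<^sup>2"
    using False by (simp add: field_simps power_mult_distrib)
  then show ?thesis
    by (rule power2_le_imp_le) simp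
qed

definition csubspace :: "'a::complex_inner_space set \<Rightarrow> bool" where
  "csubspace S \<longleftrightarrow> 0 \<in> S \<and> (\<forall>x\<in>S. \<forall>y\<in>S. x + y \<in> S) \<and> (\<forall>c. \<forall>x\<in>S. scaleC c x \<in> S)"

lemma csubspace_0: "csubspace S \<Longrightarrow> 0 \<in> S"
  by (simp add: csubspace_def)
lemma csubspace_add: "csubspace S \<Longrightarrow> x \<in> S \<Longrightarrow> y \<in> S \<Longrightarrow> x + y \<in> S"
  by (simp add: csubspace_def)
lemma csubspace_scaleC: "csubspace S \<Longrightarrow> x \<in> S \<Longrightarrow> scaleC c x \<in> S"
  by (simp add: csubspace_def)
lemma csubspace_scaleR: "csubspace S \<Longrightarrow> x \<in> S \<Longrightarrow> scaleR r x \<in> S"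
  by (simp add: csubspace_def scaleR_scaleC)
lemma csubspace_uminus: "csubspace S \<Longrightarrow> x \<in> S \<Longrightarrow> - x \<in> S"
  by (metis csubspace_scaleC scaleC_minus1)
lemma csubspace_diff: "csubspace S \<Longrightarrow> x \<in> S \<Longrightarrow> y \<in> S \<Longrightarrow> x - y \<in> S"
  by (metis csubspace_add csubspace_uminus diff_conv_add_uminus)

lemma projection_exists:
  fixes S :: "'a::complex_hilbert_space set"
  assumes sub: "csubspace S" and cl: "closed S"
  shows "\<exists>p\<in>S. \<forall>s\<in>S. cinner (x - p) s = 0"
proof -
  define g where "g s = (norm (x - s))\<^sup>2" for s
  define d where "d = Inf (g ` S)"
  have ne: "g ` S \<noteq> {}" using csubspace_0[OF sub] by blast
  have bdd: "bdd_below (g ` S)" unfolding g_def by (rule bdd_belowI[of _ 0]) auto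
  have dle: "d \<le> g s" if "s \<in> S" for s
    unfolding d_def using that bdd by (simp add: cInf_lower)
  have "\<exists>s\<in>S. g s < d + inverse (real (Suc n))" for n
  proof -
    have "Inf (g ` S) < d + inverse (real (Suc n))" unfolding d_def by simp
    then show ?thesis using cInf_less_iff[OF ne bdd] by auto
  qed
  then obtain sq where sqS: "\<And>n. sq n \<in> S" and sqlt: "\<And>n. g (sq n) < d + inverse (real (Suc n))"
    by metis
  have dist_bound: "(norm (sq m - sq n))\<^sup>2 \<le> 2 * inverse (real (Suc m)) + 2 * inverse (real (Suc n))" for m n
  proof -
    define mid where "mid = scaleR (1/2) (sq m + sq n)"
    have midS: "mid \<in> S" unfolding mid_def
      using sub sqS by (simp add: csubspace_add csubspace_scaleR)
    have e1: "(x - sq m) + (x - sq n) = scaleR 2 (x - mid)"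
      unfolding mid_def by (simp add: algebra_simps scaleR_2)
    have e2: "(x - sq m) - (x - sq n) = sq n - sq m" by simp
    have "(norm (scaleR 2 (x - mid)))\<^sup>2 + (norm (sq n - sq m))\<^sup>2 = 2 * g (sq m) + 2 * g (sq n)"
      using parallelogram[of "x - sq m" "x - sq n"] unfolding e1 e2 g_def .
    moreover have "(norm (scaleR 2 (x - mid)))\<^sup>2 = 4 * g mid"
      by (simp add: g_def power_mult_distrib)
    moreover have "norm (sq n - sq m) = norm (sq m - sq n)" by (rule norm_minus_commute)
    ultimately have "(norm (sq m - sq n))\<^sup>2 = 2 * g (sq m) + 2 * g (sq n) - 4 * g mid" by (metis add_diff_cancel_left')
    then show ?thesis using dle[OF midS] sqlt[of m] sqlt[of n] by linarith
  qed
  have "Cauchy sq"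
  proof (rule metric_CauchyI)
    fix e :: real assume e: "0 < e"
    obtain N :: nat where N: "4 / e\<^sup>2 < real N" using reals_Archimedean2 by blast
    have Npos: "0 < real N" using N e by (smt (verit) divide_pos_pos zero_less_power)
    show "\<exists>M. \<forall>m\<ge>M. \<forall>n\<ge>M. dist (sq m) (sq n) < e"
    proof (intro exI allI impI)
      fix m n assume mN: "N \<le> m" and nN: "N \<le> n"
      have "inverse (real (Suc m)) \<le> inverse (real N)"
        using mN Npos by (simp add: le_imp_inverse_le)
      moreover have "inverse (real (Suc n)) \<le> inverse (real N)"
        using nN Npos by (simp add: le_imp_inverse_le)
      ultimately have "(norm (sq m - sq n))\<^sup>2 \<le> 4 * inverse (real N)"
        using dist_bound[of m n] by linarith
      also have "4 * inverse (real N) < e\<^sup>2"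
        using N Npos e by (simp add: field_simps)
      finally have "(dist (sq m) (sq n))\<^sup>2 < e\<^sup>2" by (simp add: dist_norm)
      then show "dist (sq m) (sq n) < e"
        using e by (smt (verit) power_mono zero_le_dist)
    qed
  qed
  then obtain p where lim: "sq \<longlonglongrightarrow> p" using convergent_def Cauchy_convergent_iff by blast
  have pS: "p \<in> S" using closed_sequentially[OF cl] sqS lim by blast
  have "(\<lambda>n. g (sq n)) \<longlonglongrightarrow> g p" unfolding g_def by (intro tendsto_intros lim)
  moreover have "(\<lambda>n. g (sq n)) \<longlonglongrightarrow> d"
  proof (rule tendsto_sandwich[of "\<lambda>n. d" _ _ "\<lambda>n. d + inverse (real (Suc n))"])
    show "\<forall>\<^sub>F n in sequentially. d \<le> g (sq n)" using dle sqS by simp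
    show "\<forall>\<^sub>F n in sequentially. g (sq n) \<le> d + inverse (real (Suc n))"
      using sqlt by (simp add: less_imp_le)
  qed (simp, rule LIMSEQ_inverse_real_of_nat_add)
  ultimately have gp: "g p = d" by (rule LIMSEQ_unique)
  have "cinner (x - p) s = 0" if sS: "s \<in> S" for s
  proof (cases "s = 0")
    case True then show ?thesis by simp
  next
    case False
    define t where "t = cinner (x - p) s / complex_of_real ((norm s)\<^sup>2)"
    have "p + scaleC t s \<in> S" using sub pS sS by (simp add: csubspace_add csubspace_scaleC)
    then have "d \<le> g (p + scaleC t s)" by (rule dle)
    also have "g (p + scaleC t s) = (norm (x - p))\<^sup>2 - (cmod (cinner (x - p) s))\<^sup>2 / (norm s)\<^sup>2"
      using norm_sq_sub_component[OF False, of "x - p"] unfolding g_def t_def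
      by (simp add: algebra_simps)
    finally have "(cmod (cinner (x - p) s))\<^sup>2 / (norm s)\<^sup>2 \<le> 0"
      using gp unfolding g_def by simp
    moreover have "0 < (norm s)\<^sup>2" using False by simp
    ultimately have "(cmod (cinner (x - p) s))\<^sup>2 \<le> 0"
      by (simp add: divide_le_0_iff)
    then show ?thesis by simp
  qed
  then show ?thesis using pS by blast
qed

definition proj :: "'a::complex_inner_space set \<Rightarrow> 'a \<Rightarrow> 'a" where
  "proj S x = (SOME p. p \<in> S \<and> (\<forall>s\<in>S. cinner (x - p) s = 0))"

lemma proj_props:
  fixes S :: "'a::complex_hilbert_space set"
  assumes "csubspace S" "closed S"
  shows "proj S x \<in> S" "\<And>s. s \<in> S \<Longrightarrow> cinner (x - proj S x) s = 0"
proof -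
  have "\<exists>p. p \<in> S \<and> (\<forall>s\<in>S. cinner (x - p) s = 0)" using projection_exists[OF assms] by blast
  then have "proj S x \<in> S \<and> (\<forall>s\<in>S. cinner (x - proj S x) s = 0)"
    unfolding proj_def by (rule someI_ex)
  then show "proj S x \<in> S" "\<And>s. s \<in> S \<Longrightarrow> cinner (x - proj S x) s = 0" by auto
qed

lemma orth_unique:
  assumes "csubspace S" "p \<in> S" "q \<in> S"
    and "\<And>s. s \<in> S \<Longrightarrow> cinner (x - p) s = 0" "\<And>s. s \<in> S \<Longrightarrow> cinner (x - q) s = 0"
  shows "p = q"
proof -
  have pq: "p - q \<in> S" using assms by (simp add: csubspace_diff)
  have "cinner (p - q) (p - q) = cinner (x - q) (p - q) - cinner (x - p) (p - q)"
    by (simp add: cinner_diff_left)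
  also have "\<dots> = 0" using assms(4,5)[OF pq] by simp
  finally show ?thesis by (simp add: cinner_eq_zero_iff)
qed

lemma proj_unique:
  fixes S :: "'a::complex_hilbert_space set"
  assumes "csubspace S" "closed S" "q \<in> S" "\<And>s. s \<in> S \<Longrightarrow> cinner (x - q) s = 0"
  shows "proj S x = q"
  using orth_unique[OF assms(1) proj_props(1)[OF assms(1,2)] assms(3) proj_props(2)[OF assms(1,2)] assms(4)]
  by blast

lemma proj_fix:
  fixes S :: "'a::complex_hilbert_space set"
  assumes "csubspace S" "closed S" "x \<in> S"
  shows "proj S x = x"
  using proj_unique[OF assms(1,2,3)] by simp

lemma additive_diff:
  fixes f :: "'a::ab_group_add \<Rightarrow> 'b::ab_group_add"
  assumes add: "\<And>x y. f (x + y) = f x + f y"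
  shows "f (x - y) = f x - (f y :: 'b::ab_group_add)"
proof -
  have "f ((x - y) + y) = f (x - y) + f y" by (rule add)
  then have "f x = f (x - y) + f y" by simp
  then show ?thesis by (simp add: eq_diff_eq)
qed

lemma additive_0:
  fixes f :: "'a::ab_group_add \<Rightarrow> 'b::ab_group_add"
  assumes add: "\<And>x y. f (x + y) = f x + f y"
  shows "f 0 = (0 :: 'b::ab_group_add)"
  using add[of 0 0] by simp

lemma additive_bounded_continuous:
  fixes f :: "'a::real_normed_vector \<Rightarrow> 'b::real_normed_vector"
  assumes add: "\<And>x y. f (x + y) = f x + f y" and bnd: "\<And>x. norm (f x) \<le> C * norm x"
  shows "continuous_on UNIV f"
proof (rule lipschitz_on_continuous_on)
  show "(max C 0)-lipschitz_on UNIV f"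
  proof (rule lipschitz_onI)
    fix x y :: 'a
    have "dist (f x) (f y) = norm (f (x - y))" by (simp add: dist_norm additive_diff[OF add])
    also have "\<dots> \<le> C * norm (x - y)" by (rule bnd)
    also have "\<dots> \<le> max C 0 * norm (x - y)" by (simp add: mult_right_mono)
    finally show "dist (f x) (f y) \<le> max C 0 * dist x y" by (simp add: dist_norm)
  qed simp
qed

lemma riesz:
  fixes \<psi> :: "'a::complex_hilbert_space \<Rightarrow> complex"
  assumes add: "\<And>x y. \<psi> (x + y) = \<psi> x + \<psi> y"
    and sc: "\<And>c x. \<psi> (scaleC c x) = cnj c * \<psi> x"
    and bnd: "\<And>x. cmod (\<psi> x) \<le> C * norm x"
  shows "\<exists>z. \<forall>x. \<psi> x = cinner z x"
proof (cases "\<forall>x. \<psi> x = 0")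
  case True then show ?thesis by (intro exI[of _ 0]) simp
next
  case False
  then obtain x0 where x0: "\<psi> x0 \<noteq> 0" by blast
  define N where "N = {x. \<psi> x = 0}"
  have subN: "csubspace N" unfolding N_def csubspace_def
    using additive_0[OF add] add sc by simp
  have cont: "continuous_on UNIV \<psi>"
    by (rule additive_bounded_continuous[OF add, of C]) (simp add: bnd)
  have "closed (\<psi> -` {0})"
    by (rule closed_vimage[OF _ cont]) simp
  then have clN: "closed N" unfolding N_def by (simp add: vimage_def)
  define w where "w = x0 - proj N x0"
  have worth: "cinner w s = 0" if "s \<in> N" for s
    using proj_props(2)[OF subN clN that] unfolding w_def .
  have "\<psi> (proj N x0) = 0" using proj_props(1)[OF subN clN] unfolding N_def by simp
  then have pw: "\<psi> w = \<psi> x0" unfolding w_def by (simp add: additive_diff[OF add])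
  then have pw0: "\<psi> w \<noteq> 0" using x0 by simp
  then have w0: "w \<noteq> 0" using additive_0[OF add] by auto
  define z where "z = scaleC (\<psi> w / complex_of_real ((norm w)\<^sup>2)) w"
  have "\<psi> x = cinner z x" for x
  proof -
    define c where "c = cnj (\<psi> x / \<psi> w)"
    have "\<psi> (x - scaleC c w) = \<psi> x - cnj c * \<psi> w" by (simp add: additive_diff[OF add] sc)
    also have "\<dots> = 0" using pw0 by (simp add: c_def)
    finally have "x - scaleC c w \<in> N" unfolding N_def by simp
    then have "cinner w (x - scaleC c w) = 0" by (rule worth)
    then have "cinner w x = cnj c * complex_of_real ((norm w)\<^sup>2)"
      by (simp add: cinner_diff_right cinner_scaleC_right cinner_self_norm)
    then have e: "cinner w x = \<psi> x / \<psi> w * complex_of_real ((norm w)\<^sup>2)" by (simp add: c_def)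
    have n0: "complex_of_real ((norm w)\<^sup>2) \<noteq> 0" using w0 by simp
    have "cinner z x = (\<psi> w / complex_of_real ((norm w)\<^sup>2)) * (\<psi> x / \<psi> w * complex_of_real ((norm w)\<^sup>2))"
      unfolding z_def cinner_scaleC_left e ..
    also have "\<dots> = \<psi> x" using n0 pw0 by simp
    finally show ?thesis by simp
  qed
  then show ?thesis by blast
qed

lemma bclinD:
  assumes "bounded_clinear T"
  shows "T (x + y) = T x + T y" "T (scaleC c x) = scaleC c (T x)"
  using assms unfolding bounded_clinear_def by auto

lemma bclin_bound:
  fixes T :: "'a::complex_inner_space \<Rightarrow> 'b::complex_inner_space"
  assumes "bounded_clinear T"
  obtains C where "C \<ge> 0" "\<And>x. norm (T x) \<le> C * norm x"
proof -
  obtain C where C: "\<And>x. norm (T x) \<le> norm x * C" using assms unfolding bounded_clinear_def by blast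
  show ?thesis
  proof (rule that[of "max C 0"])
    fix x :: 'a
    have "norm x * C \<le> norm x * max C 0" by (rule mult_left_mono) auto
    then have "norm x * C \<le> max C 0 * norm x" by (simp add: mult.commute)
    then show "norm (T x) \<le> max C 0 * norm x" using C[of x] by linarith
  qed simp
qed

lemma bclin_0: "bounded_clinear T \<Longrightarrow> T 0 = 0"
  using additive_0[of T] bclinD(1) by blast

lemma bclin_diff: "bounded_clinear T \<Longrightarrow> T (x - y) = T x - T y"
  using additive_diff[of T] bclinD(1) by blast

lemma bclin_minus: "bounded_clinear T \<Longrightarrow> T (- x) = - T x"
  using bclin_diff[of T 0 x] bclin_0[of T] by simp

lemma bclin_scaleR: "bounded_clinear T \<Longrightarrow> T (scaleR r x) = scaleR r (T x)"
  by (simp add: scaleR_scaleC bclinD(2))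

lemma bclin_bounded_linear:
  assumes "bounded_clinear T" shows "bounded_linear T"
proof -
  obtain C where "\<And>x. norm (T x) \<le> C * norm x" using bclin_bound[OF assms] by blast
  then show ?thesis
    by (intro bounded_linear_intro[of _ C]) (auto simp: bclinD[OF assms] bclin_scaleR[OF assms] mult.commute)
qed

lemma bclin_continuous: "bounded_clinear T \<Longrightarrow> continuous_on UNIV T"
  by (rule linear_continuous_on[OF bclin_bounded_linear])

lemma adjoint_exists:
  fixes T :: "'a::complex_hilbert_space \<Rightarrow> 'a"
  assumes "bounded_clinear T"
  shows "\<exists>S. \<forall>x y. cinner (T x) y = cinner x (S y)"
proof -
  obtain C where C: "\<And>x. norm (T x) \<le> C * norm x" using bclin_bound[OF assms] by blast
  have "\<exists>z. \<forall>x. cinner (T x) y = cinner x z" for y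
  proof -
    have "\<exists>z. \<forall>x. cinner y (T x) = cinner z x"
    proof (rule riesz[where C = "norm y * C"])
      show "cinner y (T (x1 + x2)) = cinner y (T x1) + cinner y (T x2)" for x1 x2
        by (simp add: bclinD[OF assms] cinner_add_right)
      show "cinner y (T (scaleC c x)) = cnj c * cinner y (T x)" for c x
        by (simp add: bclinD[OF assms] cinner_scaleC_right)
      show "cmod (cinner y (T x)) \<le> norm y * C * norm x" for x
      proof -
        have "cmod (cinner y (T x)) \<le> norm y * norm (T x)" by (rule cauchy_schwarz)
        also have "\<dots> \<le> norm y * (C * norm x)" by (rule mult_left_mono[OF C]) simp
        finally show ?thesis by (simp add: mult.assoc)
      qed
    qed
    then obtain z where "\<forall>x. cinner y (T x) = cinner z x" by blast
    then have "\<forall>x. cinner (T x) y = cinner x z" by (metis cinner_commute)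
    then show ?thesis by blast
  qed
  then have "\<forall>y. \<exists>z. \<forall>x. cinner (T x) y = cinner x z" by blast
  then have "\<exists>S. \<forall>y. \<forall>x. cinner (T x) y = cinner x (S y)" by (rule choice)
  then show ?thesis by blast
qed

lemma cadjoint_spec:
  fixes T :: "'a::complex_hilbert_space \<Rightarrow> 'a"
  assumes "bounded_clinear T"
  shows "cinner (T x) y = cinner x (cadjoint T y)"
proof -
  have "\<forall>x y. cinner (T x) y = cinner x (cadjoint T y)"
    unfolding cadjoint_def using adjoint_exists[OF assms] by (rule someI_ex)
  then show ?thesis by blast
qed

lemma cadjoint_spec':
  fixes T :: "'a::complex_hilbert_space \<Rightarrow> 'a"
  assumes "bounded_clinear T"
  shows "cinner (cadjoint T y) x = cinner y (T x)"
  by (metis cadjoint_spec[OF assms] cinner_commute)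

lemma range_bclin_scaleR:
  fixes K :: "'a::complex_inner_space \<Rightarrow> 'b::complex_inner_space"
  assumes "bounded_clinear K" "y \<in> range K" shows "scaleR a y \<in> range K"
proof -
  obtain x where "y = K x" using assms(2) by blast
  then have "scaleR a y = K (scaleR a x)" by (simp add: bclin_scaleR[OF assms(1)])
  then show ?thesis by simp
qed

lemma range_bclin_add:
  fixes K :: "'a::complex_inner_space \<Rightarrow> 'b::complex_inner_space"
  assumes "bounded_clinear K" "y \<in> range K" "z \<in> range K" shows "y + z \<in> range K"
proof -
  obtain x where "y = K x" using assms(2) by blast
  moreover obtain x' where "z = K x'" using assms(3) by blast
  ultimately have "y + z = K (x + x')" by (simp add: bclinD(1)[OF assms(1)])
  then show ?thesis by simp
qed

lemma range_bclin_diff: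
  fixes K :: "'a::complex_inner_space \<Rightarrow> 'b::complex_inner_space"
  assumes "bounded_clinear K" "y \<in> range K" "z \<in> range K" shows "y - z \<in> range K"
proof -
  obtain x where "y = K x" using assms(2) by blast
  moreover obtain x' where "z = K x'" using assms(3) by blast
  ultimately have "y - z = K (x - x')" by (simp add: bclin_diff[OF assms(1)])
  then show ?thesis by simp
qed

lemma baire_step:
  fixes K :: "'a::complex_hilbert_space \<Rightarrow> 'a"
  assumes bK: "bounded_clinear K" and cl: "closed (range K)"
  shows "\<exists>n::nat. \<exists>y0\<in>range K. \<exists>r>0. \<forall>y\<in>range K. dist y y0 < r \<longrightarrow> y \<in> closure (K ` ball 0 (real n))"
proof (rule ccontr)
  define R where "R = range K"
  define C where "C n = closure (K ` ball 0 (real n))" for n :: nat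
  assume "\<not> ?thesis"
  then have neg: "\<And>n y0 r. y0 \<in> R \<Longrightarrow> r > 0 \<Longrightarrow> \<exists>y\<in>R. dist y y0 < r \<and> y \<notin> C n"
    unfolding R_def C_def by blast
  define X where "X = top_of_set R"
  have cms: "completely_metrizable_space X"
    unfolding X_def
    by (rule completely_metrizable_space_closedin[OF completely_metrizable_space_euclidean])
       (unfold R_def, rule cl[unfolded closed_closedin])
  define \<G> where "\<G> = range (\<lambda>n. R - C n)"
  have "X closure_of \<Inter>\<G> = topspace X"
  proof (rule Baire_category)
    show "completely_metrizable_space X \<or> locally_compact_space X \<and> regular_space X"
      using cms by simp
    show "countable \<G>" unfolding \<G>_def by simp
    fix T assume "T \<in> \<G>"
    then obtain n where T: "T = R - C n" unfolding \<G>_def by blast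
    show "openin X T \<and> X closure_of T = topspace X"
    proof
      show "openin X T" unfolding X_def T openin_open
        by (intro exI[of _ "- C n"]) (auto simp: C_def)
      have "R \<subseteq> closure T"
      proof
        fix y0 assume y0: "y0 \<in> R"
        show "y0 \<in> closure T" unfolding closure_approachable
        proof (intro allI impI)
          fix e :: real assume "e > 0"
          then obtain y where "y \<in> R" "dist y y0 < e" "y \<notin> C n" using neg[OF y0] by blast
          then show "\<exists>y\<in>T. dist y y0 < e" unfolding T by blast
        qed
      qed
      moreover have "T \<subseteq> R" unfolding T by blast
      ultimately have "R \<inter> closure (R \<inter> T) = R"
      proof -
        assume a1: "R \<subseteq> closure T" and a2: "T \<subseteq> R"
        have "R \<inter> T = T" using a2 by (rule Int_absorb1)
        moreover have "R \<inter> closure T = R" using a1 by (rule Int_absorb2)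
        ultimately show ?thesis by simp
      qed
      then show "X closure_of T = topspace X"
        unfolding X_def closure_of_subtopology euclidean_closure_of topspace_euclidean_subtopology .
    qed
  qed
  moreover have "\<Inter>\<G> = {}"
  proof -
    have "y \<notin> \<Inter>\<G>" for y
    proof
      assume y: "y \<in> \<Inter>\<G>"
      then have "y \<in> R" unfolding \<G>_def by auto
      then obtain x where x: "y = K x" unfolding R_def by blast
      obtain n :: nat where "norm x < real n" using reals_Archimedean2 by blast
      then have "x \<in> ball 0 (real n)" by simp
      then have "y \<in> K ` ball 0 (real n)" unfolding x by (rule imageI)
      moreover have "K ` ball 0 (real n) \<subseteq> C n" unfolding C_def by (rule closure_subset)
      ultimately have "y \<in> C n" by (rule subsetD[rotated])
      then show False using y unfolding \<G>_def by auto
    qed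
    then show ?thesis by blast
  qed
  moreover have "0 \<in> R" unfolding R_def using bclin_0[OF bK] by (metis rangeI)
  ultimately have "X closure_of {} = topspace X" by simp
  then have "R = {}" unfolding X_def by (simp only: closure_of_empty topspace_euclidean_subtopology)
  then show False using \<open>0 \<in> R\<close> by simp
qed

lemma approx_preimage:
  fixes K :: "'a::complex_hilbert_space \<Rightarrow> 'a"
  assumes bK: "bounded_clinear K" and cl: "closed (range K)"
  shows "\<exists>M\<ge>0. \<forall>y\<in>range K. \<forall>e>0. \<exists>x. norm x \<le> M * norm y \<and> norm (y - K x) < e"
proof -
  obtain n :: nat and y0 r where y0: "y0 \<in> range K" and r: "r > 0"
    and H: "\<And>y. y \<in> range K \<Longrightarrow> dist y y0 < r \<Longrightarrow> y \<in> closure (K ` ball 0 (real n))"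
    using baire_step[OF bK cl] by blast
  have step2: "\<exists>x. norm x < 2 * real n \<and> dist (K x) y < e" if y: "y \<in> range K" "norm y < r" and e: "e > 0" for y e
  proof -
    have "y0 + y \<in> range K" using y y0 by (simp add: range_bclin_add[OF bK])
    moreover have "dist (y0 + y) y0 < r" using y by (simp add: dist_norm)
    ultimately have "y0 + y \<in> closure (K ` ball 0 (real n))" by (rule H)
    then obtain x1 where x1: "x1 \<in> ball 0 (real n)" "dist (K x1) (y0 + y) < e / 2"
      unfolding closure_approachable using e by (auto dest!: spec[of _ "e/2"])
    have "y0 \<in> closure (K ` ball 0 (real n))" using H[OF y0] r by simp
    then obtain x2 where x2: "x2 \<in> ball 0 (real n)" "dist (K x2) y0 < e / 2"
      unfolding closure_approachable using e by (auto dest!: spec[of _ "e/2"])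
    have "norm (x1 - x2) \<le> norm x1 + norm x2" by (rule norm_triangle_ineq4)
    then have "norm (x1 - x2) < 2 * real n" using x1(1) x2(1) by simp
    moreover have "dist (K (x1 - x2)) y < e"
    proof -
      have "K (x1 - x2) - y = (K x1 - (y0 + y)) - (K x2 - y0)" by (simp add: bclin_diff[OF bK])
      then have "norm (K (x1 - x2) - y) \<le> norm (K x1 - (y0 + y)) + norm (K x2 - y0)"
        by (simp only: norm_triangle_ineq4)
      then show ?thesis using x1(2) x2(2) by (simp add: dist_norm)
    qed
    ultimately show ?thesis by blast
  qed
  define M where "M = 4 * real n / r"
  have M0: "M \<ge> 0" using r by (simp add: M_def)
  have "\<exists>x. norm x \<le> M * norm y \<and> norm (y - K x) < e" if y: "y \<in> range K" and e: "e > 0" for y e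
  proof (cases "y = 0")
    case True then show ?thesis using e by (intro exI[of _ 0]) (simp add: bclin_0[OF bK])
  next
    case False
    define a where "a = r / (2 * norm y)"
    have a: "a > 0" using False r by (simp add: a_def)
    have ya: "scaleR a y \<in> range K" by (rule range_bclin_scaleR[OF bK y])
    have yr: "norm (scaleR a y) < r" using a False r by (simp add: a_def)
    have ea: "e * a > 0" using e a by simp
    obtain x' where x': "norm x' < 2 * real n" "dist (K x') (scaleR a y) < e * a"
      using step2[OF ya yr ea] by blast
    define x where "x = scaleR (1 / a) x'"
    have "norm x = norm x' / a" using a by (simp add: x_def)
    also have "\<dots> \<le> 2 * real n / a" using x'(1) a by (simp add: divide_right_mono)
    also have "\<dots> = M * norm y" using False r by (simp add: a_def M_def field_simps)
    finally have nx: "norm x \<le> M * norm y" .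
    have "y - K x = scaleR (1 / a) (scaleR a y - K x')"
      using a by (simp add: x_def bclin_scaleR[OF bK] algebra_simps)
    then have "norm (y - K x) = norm (scaleR a y - K x') / a" using a by simp
    also have "\<dots> < e" using x'(2) a by (simp add: dist_norm norm_minus_commute pos_divide_less_eq)
    finally show ?thesis using nx by blast
  qed
  then show ?thesis using M0 by blast
qed

lemma exact_preimage:
  fixes K :: "'a::complex_hilbert_space \<Rightarrow> 'a"
  assumes bK: "bounded_clinear K" and cl: "closed (range K)"
  shows "\<exists>M. \<forall>y\<in>range K. \<exists>x. K x = y \<and> norm x \<le> M * norm y"
proof -
  obtain M where M0: "M \<ge> 0"
    and A: "\<And>y e. y \<in> range K \<Longrightarrow> e > 0 \<Longrightarrow> \<exists>x. norm x \<le> M * norm y \<and> norm (y - K x) < e"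
    using approx_preimage[OF bK cl] by blast
  define Af where "Af y e = (SOME x. norm x \<le> M * norm y \<and> norm (y - K x) < e)" for y e
  have Af: "norm (Af y e) \<le> M * norm y \<and> norm (y - K (Af y e)) < e" if "y \<in> range K" "e > 0" for y e
    unfolding Af_def by (rule someI_ex[OF A[OF that]])
  have "\<exists>x. K x = y \<and> norm x \<le> (2 * M) * norm y" if y: "y \<in> range K" for y
  proof (cases "y = 0")
    case True then show ?thesis by (intro exI[of _ 0]) (simp add: bclin_0[OF bK])
  next
    case False
    define \<epsilon> where "\<epsilon> k = norm y * (1/2) ^ Suc k" for k :: nat
    have \<epsilon>pos: "\<epsilon> k > 0" for k using False by (simp add: \<epsilon>_def)
    define res where "res = rec_nat y (\<lambda>k r. r - K (Af r (\<epsilon> k)))"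
    define xs where "xs k = Af (res k) (\<epsilon> k)" for k
    have res0: "res 0 = y" by (simp add: res_def)
    have resS: "res (Suc k) = res k - K (xs k)" for k by (simp add: res_def xs_def)
    have inv: "res k \<in> range K \<and> norm (res k) \<le> norm y * (1/2) ^ k" for k
    proof (induction k)
      case 0 then show ?case using y by (simp add: res0)
    next
      case (Suc k)
      then have rk: "res k \<in> range K" by simp
      have "K (xs k) \<in> range K" by simp
      then have "res (Suc k) \<in> range K" unfolding resS by (rule range_bclin_diff[OF bK rk])
      moreover have "norm (res (Suc k)) < \<epsilon> k"
        unfolding resS xs_def using Af[OF rk \<epsilon>pos] by blast
      ultimately show ?case by (simp add: \<epsilon>_def)
    qed
    define g where "g k = M * norm y * (1/2) ^ k" for k :: nat
    have xsb: "norm (xs k) \<le> g k" for k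
    proof -
      have "norm (xs k) \<le> M * norm (res k)" unfolding xs_def using Af[of "res k" "\<epsilon> k"] inv \<epsilon>pos by blast
      also have "\<dots> \<le> M * (norm y * (1/2) ^ k)" using inv[of k] M0 by (simp add: mult_left_mono)
      finally show ?thesis by (simp add: g_def mult.assoc)
    qed
    have sg: "summable g" unfolding g_def by (intro summable_mult summable_geometric) simp
    have sxs: "summable xs" by (rule summable_comparison_test[OF _ sg]) (use xsb in blast)
    define x where "x = suminf xs"
    have "norm x \<le> suminf g" unfolding x_def by (rule norm_suminf_le[OF xsb sg])
    also have "suminf g = 2 * M * norm y"
      unfolding g_def by (subst suminf_mult) (simp_all add: suminf_geometric)
    finally have nx: "norm x \<le> 2 * M * norm y" .
    have "K x = (\<Sum>n. K (xs n))" unfolding x_def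
      by (rule bounded_linear.suminf[OF bclin_bounded_linear[OF bK] sxs])
    also have "(\<lambda>n. K (xs n)) = (\<lambda>n. res n - res (Suc n))" by (simp add: resS)
    also have "(\<Sum>n. res n - res (Suc n)) = y"
    proof -
      have "res \<longlonglongrightarrow> 0"
      proof (rule Lim_null_comparison)
        show "\<forall>\<^sub>F k in sequentially. norm (res k) \<le> norm y * (1/2) ^ k" using inv by simp
        show "(\<lambda>k. norm y * (1/2::real) ^ k) \<longlonglongrightarrow> 0"
          using tendsto_mult[OF tendsto_const[of "norm y"] LIMSEQ_power_zero[of "1/2::real"]] by simp
      qed
      then have "(\<lambda>n. res n - res (Suc n)) sums (res 0 - 0)" by (rule telescope_sums')
      then show ?thesis by (simp add: res0 sums_iff)
    qed
    finally show ?thesis using nx by (intro exI[of _ x]) simp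
  qed
  then show ?thesis by blast
qed

lemma csubspace_range:
  fixes K :: "'a::complex_inner_space \<Rightarrow> 'b::complex_inner_space"
  assumes "bounded_clinear K" shows "csubspace (range K)"
  unfolding csubspace_def
proof (intro conjI ballI allI)
  show "0 \<in> range K" using bclin_0[OF assms] by (metis rangeI)
  show "x + y \<in> range K" if "x \<in> range K" "y \<in> range K" for x y
    by (rule range_bclin_add[OF assms that])
  fix c x assume "x \<in> range K"
  then obtain z where "x = K z" by blast
  then have "scaleC c x = K (scaleC c z)" by (simp add: bclinD(2)[OF assms])
  then show "scaleC c x \<in> range K" by simp
qed

lemma csubspace_kernel:
  fixes K :: "'a::complex_inner_space \<Rightarrow> 'b::complex_inner_space"
  assumes "bounded_clinear K" shows "csubspace {x. K x = 0}"
  unfolding csubspace_def using bclin_0[OF assms] bclinD[OF assms] by simp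

lemma closed_kernel:
  fixes K :: "'a::complex_inner_space \<Rightarrow> 'b::complex_inner_space"
  assumes "bounded_clinear K" shows "closed {x. K x = 0}"
proof -
  have "closed (K -` {0})" by (rule closed_vimage[OF _ bclin_continuous[OF assms]]) simp
  then show ?thesis by (simp add: vimage_def)
qed

lemma proj_norm_le:
  fixes S :: "'a::complex_hilbert_space set"
  assumes "csubspace S" "closed S"
  shows "norm (proj S y) \<le> norm y"
proof -
  have "cinner (y - proj S y) (proj S y) = 0" by (rule proj_props(2)[OF assms proj_props(1)[OF assms]])
  then have "cinner (proj S y) (y - proj S y) = 0" by (metis cinner_commute complex_cnj_zero)
  then have "(norm (proj S y + (y - proj S y)))\<^sup>2 = (norm (proj S y))\<^sup>2 + (norm (y - proj S y))\<^sup>2"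
    by (rule pythagoras)
  then have "(norm (proj S y))\<^sup>2 \<le> (norm y)\<^sup>2" by simp
  then show ?thesis by (rule power2_le_imp_le) simp
qed

lemma proj_selfadjoint:
  fixes S :: "'a::complex_hilbert_space set"
  assumes "csubspace S" "closed S"
  shows "cinner (proj S x) y = cinner x (proj S y)"
proof -
  have a: "cinner (y - proj S y) (proj S x) = 0" by (rule proj_props(2)[OF assms proj_props(1)[OF assms]])
  have b: "cinner (x - proj S x) (proj S y) = 0" by (rule proj_props(2)[OF assms proj_props(1)[OF assms]])
  have "cinner (proj S x) y = cinner (proj S x) (proj S y) + cinner (proj S x) (y - proj S y)"
    by (simp add: cinner_diff_right)
  also have "cinner (proj S x) (y - proj S y) = 0" using a by (metis cinner_commute complex_cnj_zero)
  also have "cinner x (proj S y) = cinner (proj S x) (proj S y) + cinner (x - proj S x) (proj S y)"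
    by (simp add: cinner_diff_left)
  ultimately show ?thesis using b by simp
qed

lemma proj_add:
  fixes S :: "'a::complex_hilbert_space set"
  assumes "csubspace S" "closed S"
  shows "proj S (x + y) = proj S x + proj S y"
proof (rule proj_unique[OF assms])
  show "proj S x + proj S y \<in> S" using assms by (simp add: csubspace_add proj_props(1))
  fix s assume s: "s \<in> S"
  have "cinner (x + y - (proj S x + proj S y)) s = cinner (x - proj S x) s + cinner (y - proj S y) s"
    by (simp add: cinner_add_left[symmetric] algebra_simps)
  then show "cinner (x + y - (proj S x + proj S y)) s = 0" using proj_props(2)[OF assms s] by simp
qed

lemma proj_scaleC:
  fixes S :: "'a::complex_hilbert_space set"
  assumes "csubspace S" "closed S"
  shows "proj S (scaleC c x) = scaleC c (proj S x)"
proof (rule proj_unique[OF assms])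
  show "scaleC c (proj S x) \<in> S" using assms by (simp add: csubspace_scaleC proj_props(1))
  fix s assume s: "s \<in> S"
  have "scaleC c x - scaleC c (proj S x) = scaleC c (x - proj S x)"
    by (metis add_diff_cancel diff_add_cancel scaleC_add_right)
  then have "cinner (scaleC c x - scaleC c (proj S x)) s = c * cinner (x - proj S x) s"
    by (simp add: cinner_scaleC_left)
  then show "cinner (scaleC c x - scaleC c (proj S x)) s = 0" using proj_props(2)[OF assms s] by simp
qed

locale mp_setup =
  fixes K :: "'a::complex_hilbert_space \<Rightarrow> 'a"
  assumes bK: "bounded_clinear K" and clR: "closed (range K)"
begin

definition "Nk = {x. K x = 0}"
definition "PR = proj (range K)"
definition "PN = proj Nk"
definition "Kd y = (let x' = (SOME x'. K x' = PR y) in x' - PN x')"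

lemma subR: "csubspace (range K)" by (rule csubspace_range[OF bK])
lemma subN: "csubspace Nk" unfolding Nk_def by (rule csubspace_kernel[OF bK])
lemma clN: "closed Nk" unfolding Nk_def by (rule closed_kernel[OF bK])

lemma PR_in: "PR y \<in> range K" unfolding PR_def by (rule proj_props(1)[OF subR clR])
lemma PN_in: "PN y \<in> Nk" unfolding PN_def by (rule proj_props(1)[OF subN clN])
lemma PN_orth: "n \<in> Nk \<Longrightarrow> cinner (x - PN x) n = 0" unfolding PN_def by (rule proj_props(2)[OF subN clN])

lemma Kd_K: "K (Kd y) = PR y"
proof -
  have ex: "\<exists>x'. K x' = PR y" using PR_in[of y] by (metis rangeE)
  define x' where "x' = (SOME x'. K x' = PR y)"
  have "K x' = PR y" unfolding x'_def by (rule someI_ex[OF ex])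
  moreover have "K (PN x') = 0" using PN_in[of x'] by (simp add: Nk_def)
  ultimately show ?thesis unfolding Kd_def x'_def[symmetric] Let_def by (simp add: bclin_diff[OF bK])
qed

lemma Kd_orth: "n \<in> Nk \<Longrightarrow> cinner (Kd y) n = 0"
  unfolding Kd_def Let_def by (rule PN_orth)

lemma orthN_unique:
  assumes "\<And>n. n \<in> Nk \<Longrightarrow> cinner z1 n = 0" "\<And>n. n \<in> Nk \<Longrightarrow> cinner z2 n = 0" "K z1 = K z2"
  shows "z1 = z2"
proof -
  have d: "z1 - z2 \<in> Nk" using assms(3) by (simp add: Nk_def bclin_diff[OF bK])
  have "cinner (z1 - z2) (z1 - z2) = cinner z1 (z1 - z2) - cinner z2 (z1 - z2)" by (simp add: cinner_diff_left)
  also have "\<dots> = 0" using assms(1,2)[OF d] by simp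
  finally show ?thesis by (simp add: cinner_eq_zero_iff)
qed

lemma Kd_add: "Kd (x + y) = Kd x + Kd y"
proof (rule orthN_unique)
  show "cinner (Kd (x + y)) n = 0" if "n \<in> Nk" for n using Kd_orth[OF that] .
  show "cinner (Kd x + Kd y) n = 0" if "n \<in> Nk" for n using Kd_orth[OF that] by (simp add: cinner_add_left)
  show "K (Kd (x + y)) = K (Kd x + Kd y)"
    by (simp add: Kd_K bclinD(1)[OF bK] PR_def proj_add[OF subR clR])
qed

lemma Kd_scaleC: "Kd (scaleC c x) = scaleC c (Kd x)"
proof (rule orthN_unique)
  show "cinner (Kd (scaleC c x)) n = 0" if "n \<in> Nk" for n using Kd_orth[OF that] .
  show "cinner (scaleC c (Kd x)) n = 0" if "n \<in> Nk" for n using Kd_orth[OF that] by (simp add: cinner_scaleC_left)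
  show "K (Kd (scaleC c x)) = K (scaleC c (Kd x))"
    by (simp add: Kd_K bclinD(2)[OF bK] PR_def proj_scaleC[OF subR clR])
qed

lemma lower_bound: "\<exists>c. \<forall>z. (\<forall>n\<in>Nk. cinner z n = 0) \<longrightarrow> norm z \<le> c * norm (K z)"
proof -
  obtain M where M: "\<And>y. y \<in> range K \<Longrightarrow> \<exists>x. K x = y \<and> norm x \<le> M * norm y"
    using exact_preimage[OF bK clR] by blast
  have "norm z \<le> M * norm (K z)" if z: "\<forall>n\<in>Nk. cinner z n = 0" for z
  proof -
    obtain x where x: "K x = K z" "norm x \<le> M * norm (K z)" using M[of "K z"] by blast
    have "x - z \<in> Nk" using x(1) by (simp add: Nk_def bclin_diff[OF bK])
    then have "cinner z (x - z) = 0" using z by blast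
    then have "(norm (z + (x - z)))\<^sup>2 = (norm z)\<^sup>2 + (norm (x - z))\<^sup>2" by (rule pythagoras)
    then have "(norm z)\<^sup>2 \<le> (norm x)\<^sup>2" by simp
    then have "norm z \<le> norm x" by (rule power2_le_imp_le) simp
    then show ?thesis using x(2) by simp
  qed
  then show ?thesis by blast
qed

lemma Kd_bclin: "bounded_clinear Kd"
proof -
  obtain c where c: "\<And>z. (\<forall>n\<in>Nk. cinner z n = 0) \<Longrightarrow> norm z \<le> c * norm (K z)"
    using lower_bound by blast
  have c0: "c \<ge> 0 \<or> (\<forall>y. Kd y = 0)"
  proof (cases "c \<ge> 0")
    case False
    have "Kd y = 0" for y
    proof -
      have "norm (Kd y) \<le> c * norm (K (Kd y))" using c Kd_orth by blast
      also have "\<dots> \<le> 0" using False by (simp add: mult_nonpos_nonneg)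
      finally show ?thesis by simp
    qed
    then show ?thesis by blast
  qed simp
  have "norm (Kd y) \<le> norm y * max c 0" for y
  proof (cases "c \<ge> 0")
    case True
    have "norm (Kd y) \<le> c * norm (K (Kd y))" using c Kd_orth by blast
    also have "\<dots> = c * norm (PR y)" by (simp add: Kd_K)
    also have "\<dots> \<le> c * norm y" unfolding PR_def by (rule mult_left_mono[OF proj_norm_le[OF subR clR] True])
    finally show ?thesis using True by (simp add: mult.commute)
  next
    case False then show ?thesis using c0 by simp
  qed
  then show ?thesis unfolding bounded_clinear_def using Kd_add Kd_scaleC by blast
qed

lemma penrose1: "K (Kd (K x)) = K x"
  by (simp add: Kd_K PR_def proj_fix[OF subR clR])

lemma Kd_K_eq: "Kd (K x) = x - PN x"
proof (rule orthN_unique)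
  show "cinner (Kd (K x)) n = 0" if "n \<in> Nk" for n using Kd_orth[OF that] .
  show "cinner (x - PN x) n = 0" if "n \<in> Nk" for n using PN_orth[OF that] .
  have "K (PN x) = 0" using PN_in[of x] by (simp add: Nk_def)
  then show "K (Kd (K x)) = K (x - PN x)" by (simp add: penrose1 bclin_diff[OF bK])
qed

lemma penrose2: "Kd (K (Kd y)) = Kd y"
proof (rule orthN_unique)
  show "cinner (Kd (K (Kd y))) n = 0" if "n \<in> Nk" for n using Kd_orth[OF that] .
  show "cinner (Kd y) n = 0" if "n \<in> Nk" for n using Kd_orth[OF that] .
  show "K (Kd (K (Kd y))) = K (Kd y)" by (rule penrose1)
qed

lemma penrose3: "selfadjoint_op (K \<circ> Kd)"
  unfolding selfadjoint_op_def comp_def Kd_K PR_def by (simp add: proj_selfadjoint[OF subR clR])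

lemma penrose4: "selfadjoint_op (Kd \<circ> K)"
  unfolding selfadjoint_op_def comp_def Kd_K_eq PN_def[symmetric]
  by (simp add: PN_def proj_selfadjoint[OF subN clN] cinner_diff_left cinner_diff_right)

lemma mp_unique:
  assumes X: "bounded_clinear X" "K \<circ> X \<circ> K = K" "X \<circ> K \<circ> X = X"
    "selfadjoint_op (K \<circ> X)" "selfadjoint_op (X \<circ> K)"
  shows "X = Kd"
proof
  fix y
  have KXK: "K (X (K z)) = K z" for z using X(2) by (metis comp_apply)
  have XKX: "X (K (X z)) = X z" for z using X(3) by (metis comp_apply)
  have s1: "cinner (K (X a)) b = cinner a (K (X b))" for a b using X(4) unfolding selfadjoint_op_def by simp
  have s2: "cinner (X (K a)) b = cinner a (X (K b))" for a b using X(5) unfolding selfadjoint_op_def by simp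
  have "K (X y) = PR y" unfolding PR_def
  proof (rule proj_unique[OF subR clR, symmetric])
    show "K (X y) \<in> range K" by simp
    fix s assume "s \<in> range K"
    then obtain z where z: "s = K z" by blast
    have "cinner (K (X y)) (K z) = cinner y (K (X (K z)))" by (rule s1)
    then show "cinner (y - K (X y)) s = 0" unfolding z by (simp add: cinner_diff_left KXK)
  qed
  moreover have "cinner (X y) n = 0" if n: "n \<in> Nk" for n
  proof -
    have "cinner (X y) n = cinner (X (K (X y))) n" by (simp add: XKX)
    also have "\<dots> = cinner (X y) (X (K n))" by (rule s2)
    also have "K n = 0" using n by (simp add: Nk_def)
    finally show ?thesis by (simp add: bclin_0[OF X(1)])
  qed
  ultimately show "X y = Kd y"
    using orthN_unique[of "X y" "Kd y"] Kd_orth by (simp add: Kd_K)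
qed

lemma moore_penrose_eq: "moore_penrose K = Kd"
  unfolding moore_penrose_def
proof (rule the_equality)
  show "bounded_clinear Kd \<and> K \<circ> Kd \<circ> K = K \<and> Kd \<circ> K \<circ> Kd = Kd \<and>
        selfadjoint_op (K \<circ> Kd) \<and> selfadjoint_op (Kd \<circ> K)"
    using Kd_bclin penrose1 penrose2 penrose3 penrose4 by (auto simp: fun_eq_iff)
  show "\<And>X. bounded_clinear X \<and> K \<circ> X \<circ> K = K \<and> X \<circ> K \<circ> X = X \<and>
        selfadjoint_op (K \<circ> X) \<and> selfadjoint_op (X \<circ> K) \<Longrightarrow> X = Kd"
    using mp_unique by blast
qed

end

definition L2fam :: "'o measure \<Rightarrow> ('o \<Rightarrow> 'h::complex_inner_space) \<Rightarrow> bool" where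
  "L2fam M A \<longleftrightarrow> (\<forall>f. (\<lambda>\<omega>. cinner f (A \<omega>)) \<in> borel_measurable M \<and>
      (\<integral>\<^sup>+\<omega>. ennreal ((cmod (cinner f (A \<omega>)))\<^sup>2) \<partial>M) < \<infinity>)"

definition WW :: "'o measure \<Rightarrow> ('o \<Rightarrow> 'h::complex_inner_space) \<Rightarrow> ('o \<Rightarrow> 'h) \<Rightarrow> 'h \<Rightarrow> 'h \<Rightarrow> complex" where
  "WW M A B f h = (LINT \<omega>|M. cinner f (A \<omega>) * cinner (B \<omega>) h)"

lemma borel_measurable_cnj' [measurable]: "cnj \<in> borel_measurable borel"
  by (intro borel_measurable_continuous_onI continuous_intros)

lemma prod_bound_pt: "(x::real) \<ge> 0 \<Longrightarrow> y \<ge> 0 \<Longrightarrow> x * y \<le> x\<^sup>2 + y\<^sup>2"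
proof -
  assume "x \<ge> 0" "y \<ge> 0"
  then have "0 \<le> x * y" by simp
  moreover have "2 * x * y \<le> x\<^sup>2 + y\<^sup>2" by (rule sum_squares_bound)
  ultimately show ?thesis by linarith
qed

lemma prod_bound_pt2:
  fixes x y a :: real assumes a: "a > 0"
  shows "x * y \<le> (a * x\<^sup>2 + y\<^sup>2 / a) / 2"
proof -
  have "x * y * (2 * a) \<le> (a * x)\<^sup>2 + y\<^sup>2"
    using sum_squares_bound[of "a * x" y] by (simp add: algebra_simps)
  then have "x * y \<le> ((a * x)\<^sup>2 + y\<^sup>2) / (2 * a)" using a by (simp add: pos_le_divide_eq)
  also have "((a * x)\<^sup>2 + y\<^sup>2) / (2 * a) = (a * x\<^sup>2 + y\<^sup>2 / a) / 2"
    using a by (simp add: field_simps power2_eq_square)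
  finally show ?thesis .
qed

lemma sq_integrable:
  fixes u :: "'o \<Rightarrow> complex"
  assumes um: "u \<in> borel_measurable M" and uf: "(\<integral>\<^sup>+\<omega>. ennreal ((cmod (u \<omega>))\<^sup>2) \<partial>M) < \<infinity>"
  shows "integrable M (\<lambda>\<omega>. (cmod (u \<omega>))\<^sup>2)"
  unfolding integrable_iff_bounded
proof
  show "(\<lambda>\<omega>. (cmod (u \<omega>))\<^sup>2) \<in> borel_measurable M" using um by measurable
  show "(\<integral>\<^sup>+\<omega>. ennreal (norm ((cmod (u \<omega>))\<^sup>2)) \<partial>M) < \<infinity>" using uf by simp
qed

lemma prod_integrable:
  fixes u v :: "'o \<Rightarrow> complex"
  assumes um: "u \<in> borel_measurable M" and vm: "v \<in> borel_measurable M"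
    and uf: "(\<integral>\<^sup>+\<omega>. ennreal ((cmod (u \<omega>))\<^sup>2) \<partial>M) < \<infinity>"
    and vf: "(\<integral>\<^sup>+\<omega>. ennreal ((cmod (v \<omega>))\<^sup>2) \<partial>M) < \<infinity>"
  shows "integrable M (\<lambda>\<omega>. u \<omega> * v \<omega>)"
  unfolding integrable_iff_bounded
proof
  show "(\<lambda>\<omega>. u \<omega> * v \<omega>) \<in> borel_measurable M" using um vm by measurable
  have "(\<integral>\<^sup>+\<omega>. ennreal (norm (u \<omega> * v \<omega>)) \<partial>M) \<le>
        (\<integral>\<^sup>+\<omega>. ennreal ((cmod (u \<omega>))\<^sup>2) + ennreal ((cmod (v \<omega>))\<^sup>2) \<partial>M)"
  proof (rule nn_integral_mono)
    fix \<omega>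
    have "norm (u \<omega> * v \<omega>) \<le> (cmod (u \<omega>))\<^sup>2 + (cmod (v \<omega>))\<^sup>2"
      unfolding norm_mult by (rule prod_bound_pt) simp_all
    then have "ennreal (norm (u \<omega> * v \<omega>)) \<le> ennreal ((cmod (u \<omega>))\<^sup>2 + (cmod (v \<omega>))\<^sup>2)"
      by (rule ennreal_leI)
    also have "\<dots> = ennreal ((cmod (u \<omega>))\<^sup>2) + ennreal ((cmod (v \<omega>))\<^sup>2)"
      by (rule ennreal_plus) simp_all
    finally show "ennreal (norm (u \<omega> * v \<omega>)) \<le> ennreal ((cmod (u \<omega>))\<^sup>2) + ennreal ((cmod (v \<omega>))\<^sup>2)" .
  qed
  also have "\<dots> = (\<integral>\<^sup>+\<omega>. ennreal ((cmod (u \<omega>))\<^sup>2) \<partial>M) + (\<integral>\<^sup>+\<omega>. ennreal ((cmod (v \<omega>))\<^sup>2) \<partial>M)"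
  proof (rule nn_integral_add)
    show "(\<lambda>\<omega>. ennreal ((cmod (u \<omega>))\<^sup>2)) \<in> borel_measurable M" using um by measurable
    show "(\<lambda>\<omega>. ennreal ((cmod (v \<omega>))\<^sup>2)) \<in> borel_measurable M" using vm by measurable
  qed
  also have "\<dots> < \<infinity>" using uf vf by simp
  finally show "(\<integral>\<^sup>+\<omega>. ennreal (norm (u \<omega> * v \<omega>)) \<partial>M) < \<infinity>" .
qed

lemma cinner_swap_fun: "(\<lambda>\<omega>. cinner (B \<omega>) h) = (\<lambda>\<omega>. cnj (cinner h (B \<omega>)))"
  by (rule ext) (rule cinner_commute)

lemma L2D:
  assumes "L2fam M A"
  shows "(\<lambda>\<omega>. cinner f (A \<omega>)) \<in> borel_measurable M"
    "(\<integral>\<^sup>+\<omega>. ennreal ((cmod (cinner f (A \<omega>)))\<^sup>2) \<partial>M) < \<infinity>"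
    "(\<lambda>\<omega>. cinner (A \<omega>) f) \<in> borel_measurable M"
    "(\<integral>\<^sup>+\<omega>. ennreal ((cmod (cinner (A \<omega>) f))\<^sup>2) \<partial>M) < \<infinity>"
proof -
  show m: "(\<lambda>\<omega>. cinner f (A \<omega>)) \<in> borel_measurable M" for f using assms unfolding L2fam_def by blast
  show i: "(\<integral>\<^sup>+\<omega>. ennreal ((cmod (cinner f (A \<omega>)))\<^sup>2) \<partial>M) < \<infinity>" for f using assms unfolding L2fam_def by blast
  show "(\<lambda>\<omega>. cinner (A \<omega>) f) \<in> borel_measurable M" unfolding cinner_swap_fun
    using m[of f] by measurable
  show "(\<integral>\<^sup>+\<omega>. ennreal ((cmod (cinner (A \<omega>) f))\<^sup>2) \<partial>M) < \<infinity>"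
    using i[of f] by (simp add: cinner_swap_fun[of A f, THEN fun_cong])
qed

lemma WW_integrable:
  assumes "L2fam M A" "L2fam M B"
  shows "integrable M (\<lambda>\<omega>. cinner f (A \<omega>) * cinner (B \<omega>) h)"
  by (rule prod_integrable) (use L2D[OF assms(1)] L2D[OF assms(2)] in auto)

lemma WW_add_right:
  assumes "L2fam M A" "L2fam M B"
  shows "WW M A B f (h1 + h2) = WW M A B f h1 + WW M A B f h2"
proof -
  have "WW M A B f (h1 + h2) = (LINT \<omega>|M. cinner f (A \<omega>) * cinner (B \<omega>) h1 + cinner f (A \<omega>) * cinner (B \<omega>) h2)"
    unfolding WW_def by (simp add: cinner_add_right algebra_simps)
  also have "\<dots> = WW M A B f h1 + WW M A B f h2"
    unfolding WW_def by (rule Bochner_Integration.integral_add) (rule WW_integrable[OF assms])+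
  finally show ?thesis .
qed

lemma WW_scaleC_right:
  shows "WW M A B f (scaleC c h) = cnj c * WW M A B f h"
proof -
  have "WW M A B f (scaleC c h) = (LINT \<omega>|M. cnj c * (cinner f (A \<omega>) * cinner (B \<omega>) h))"
    unfolding WW_def by (simp add: cinner_scaleC_right algebra_simps)
  then show ?thesis unfolding WW_def by simp
qed

lemma WW_cnj: "WW M A B f h = cnj (WW M B A h f)"
proof -
  have "cnj (WW M B A h f) = (LINT \<omega>|M. cnj (cinner h (B \<omega>) * cinner (A \<omega>) f))"
    unfolding WW_def by (rule Bochner_Integration.integral_cnj[symmetric])
  also have "\<dots> = WW M A B f h" unfolding WW_def
    by (rule Bochner_Integration.integral_cong[OF refl])
       (simp add: cinner_commute[of "B _" h] cinner_commute[of f "A _"] mult.commute)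
  finally show ?thesis by simp
qed

lemma bessel_L2:
  assumes "cont_bessel M G"
  shows "L2fam M G"
  unfolding L2fam_def
proof (intro allI conjI)
  fix f
  show "(\<lambda>\<omega>. cinner f (G \<omega>)) \<in> borel_measurable M"
    using assms unfolding cont_bessel_def weakly_measurable_def by blast
  obtain B where "\<forall>f. (\<integral>\<^sup>+\<omega>. ennreal ((cmod (cinner f (G \<omega>)))\<^sup>2) \<partial>M) \<le> ennreal (B * (norm f)\<^sup>2)"
    using assms unfolding cont_bessel_def by blast
  then have "(\<integral>\<^sup>+\<omega>. ennreal ((cmod (cinner f (G \<omega>)))\<^sup>2) \<partial>M) \<le> ennreal (B * (norm f)\<^sup>2)" by blast
  also have "\<dots> < \<infinity>" by simp
  finally show "(\<integral>\<^sup>+\<omega>. ennreal ((cmod (cinner f (G \<omega>)))\<^sup>2) \<partial>M) < \<infinity>" .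
qed

lemma real_sq_integral_le:
  fixes u :: "'o \<Rightarrow> complex"
  assumes um: "u \<in> borel_measurable M" and uf: "(\<integral>\<^sup>+\<omega>. ennreal ((cmod (u \<omega>))\<^sup>2) \<partial>M) \<le> ennreal c"
    and c: "c \<ge> 0"
  shows "(LINT \<omega>|M. (cmod (u \<omega>))\<^sup>2) \<le> c"
proof -
  have uf': "(\<integral>\<^sup>+\<omega>. ennreal ((cmod (u \<omega>))\<^sup>2) \<partial>M) < \<infinity>" using uf by (simp add: le_less_trans)
  have "ennreal (LINT \<omega>|M. (cmod (u \<omega>))\<^sup>2) = (\<integral>\<^sup>+\<omega>. ennreal ((cmod (u \<omega>))\<^sup>2) \<partial>M)"
    by (rule nn_integral_eq_integral[symmetric]) (simp_all add: sq_integrable[OF um uf'])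
  also have "\<dots> \<le> ennreal c" by (rule uf)
  finally show ?thesis using c by (simp add: ennreal_le_iff)
qed

lemma WW_bound:
  assumes A: "L2fam M A" and B: "L2fam M B"
    and Bb: "\<And>h. (\<integral>\<^sup>+\<omega>. ennreal ((cmod (cinner h (B \<omega>)))\<^sup>2) \<partial>M) \<le> ennreal (Bc * (norm h)\<^sup>2)"
    and Bc: "Bc \<ge> 0"
  shows "\<exists>C. \<forall>h. cmod (WW M A B f h) \<le> C * norm h"
proof -
  define U where "U = (LINT \<omega>|M. (cmod (cinner f (A \<omega>)))\<^sup>2)"
  have U0: "U \<ge> 0" unfolding U_def by simp
  have intU: "integrable M (\<lambda>\<omega>. (cmod (cinner f (A \<omega>)))\<^sup>2)"
    by (rule sq_integrable) (use L2D[OF A] in auto)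
  have "cmod (WW M A B f h) \<le> ((U + Bc) / 2) * norm h" for h
  proof (cases "h = 0")
    case True
    then show ?thesis by (simp add: WW_def)
  next
    case False
    define a where "a = norm h"
    have a: "a > 0" using False by (simp add: a_def)
    have intV: "integrable M (\<lambda>\<omega>. (cmod (cinner h (B \<omega>)))\<^sup>2)"
      by (rule sq_integrable) (use L2D[OF B] in auto)
    have V: "(LINT \<omega>|M. (cmod (cinner h (B \<omega>)))\<^sup>2) \<le> Bc * (norm h)\<^sup>2"
      by (rule real_sq_integral_le[OF _ Bb]) (use L2D[OF B] Bc in auto)
    have "cmod (WW M A B f h) \<le> (LINT \<omega>|M. (a * (cmod (cinner f (A \<omega>)))\<^sup>2 + (cmod (cinner h (B \<omega>)))\<^sup>2 / a) / 2)"
      unfolding WW_def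
    proof -
      have i1: "integrable M (\<lambda>\<omega>. cinner f (A \<omega>) * cinner (B \<omega>) h)" by (rule WW_integrable[OF A B])
      have i2: "integrable M (\<lambda>\<omega>. (a * (cmod (cinner f (A \<omega>)))\<^sup>2 + (cmod (cinner h (B \<omega>)))\<^sup>2 / a) / 2)"
        using intU intV by simp
      have pt: "norm (cinner f (A \<omega>) * cinner (B \<omega>) h) \<le> (a * (cmod (cinner f (A \<omega>)))\<^sup>2 + (cmod (cinner h (B \<omega>)))\<^sup>2 / a) / 2" for \<omega>
      proof -
        have "cmod (cinner (B \<omega>) h) = cmod (cinner h (B \<omega>))" by (simp add: cinner_commute[of "B \<omega>" h])
        then show ?thesis unfolding norm_mult using prod_bound_pt2[OF a] by simp
      qed
      have "cmod (CLINT \<omega>|M. cinner f (A \<omega>) * cinner (B \<omega>) h) \<le> (LINT \<omega>|M. norm (cinner f (A \<omega>) * cinner (B \<omega>) h))"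
        by (rule Bochner_Integration.integral_norm_bound)
      also have "\<dots> \<le> (LINT \<omega>|M. (a * (cmod (cinner f (A \<omega>)))\<^sup>2 + (cmod (cinner h (B \<omega>)))\<^sup>2 / a) / 2)"
        by (rule Bochner_Integration.integral_mono[OF integrable_norm[OF i1] i2 pt])
      finally show "cmod (CLINT \<omega>|M. cinner f (A \<omega>) * cinner (B \<omega>) h) \<le> (LINT \<omega>|M. (a * (cmod (cinner f (A \<omega>)))\<^sup>2 + (cmod (cinner h (B \<omega>)))\<^sup>2 / a) / 2)" .
    qed
    also have "\<dots> = (a * U + (LINT \<omega>|M. (cmod (cinner h (B \<omega>)))\<^sup>2) / a) / 2"
      using intU intV by (simp add: U_def)
    also have "\<dots> \<le> (a * U + Bc * a\<^sup>2 / a) / 2"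
      using V a by (simp add: a_def divide_right_mono)
    also have "\<dots> = ((U + Bc) / 2) * norm h"
      using a by (simp add: a_def field_simps power2_eq_square)
    finally show ?thesis .
  qed
  then show ?thesis by blast
qed

lemma adj_char:
  assumes A: "L2fam M A" and B: "L2fam M B"
    and Bb: "\<And>h. (\<integral>\<^sup>+\<omega>. ennreal ((cmod (cinner h (B \<omega>)))\<^sup>2) \<partial>M) \<le> ennreal (Bc * (norm h)\<^sup>2)"
    and Bc: "Bc \<ge> 0"
  shows "cinner (analysis_adj M B (analysis_op A f)) h = WW M A B f (h :: 'h::complex_hilbert_space)"
proof -
  have l2: "l2_inner M (analysis_op A f) (analysis_op B h') = WW M A B f h'" for h'
    unfolding l2_inner_def analysis_op_def WW_def
    by (simp add: cinner_commute[of "B _" h'])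
  obtain C where C: "\<And>h. cmod (WW M A B f h) \<le> C * norm h" using WW_bound[OF A B Bb Bc] by blast
  have "\<exists>z. \<forall>h. WW M A B f h = cinner z h"
    by (rule riesz[OF WW_add_right[OF A B] WW_scaleC_right C])
  then obtain z where z: "\<And>h. WW M A B f h = cinner z h" by blast
  have "analysis_adj M B (analysis_op A f) = z"
    unfolding analysis_adj_def
  proof (rule the_equality)
    show "\<forall>h. cinner z h = l2_inner M (analysis_op A f) (analysis_op B h)" using z l2 by simp
    fix x assume "\<forall>h. cinner x h = l2_inner M (analysis_op A f) (analysis_op B h)"
    then show "x = z" using z l2 by (intro cinner_ext) simp
  qed
  then show ?thesis using z by simp
qed

lemma polarization:
  fixes s1 s2 :: "'a::complex_inner_space \<Rightarrow> 'a \<Rightarrow> complex"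
  assumes a1: "\<And>x y z. s1 (x + y) z = s1 x z + s1 y z" "\<And>x y z. s1 x (y + z) = s1 x y + s1 x z"
    "\<And>c x y. s1 (scaleC c x) y = c * s1 x y" "\<And>c x y. s1 x (scaleC c y) = cnj c * s1 x y"
  assumes a2: "\<And>x y z. s2 (x + y) z = s2 x z + s2 y z" "\<And>x y z. s2 x (y + z) = s2 x y + s2 x z"
    "\<And>c x y. s2 (scaleC c x) y = c * s2 x y" "\<And>c x y. s2 x (scaleC c y) = cnj c * s2 x y"
  assumes q: "\<And>x. s1 x x = s2 x x"
  shows "s1 g h = s2 g h"
proof -
  have form: "2 * s g h = (s (g + h) (g + h) - s g g - s h h) + \<i> * (s (g + scaleC \<i> h) (g + scaleC \<i> h) - s g g - s h h)"
    if b: "\<And>x y z. s (x + y) z = s x z + s y z" "\<And>x y z. s x (y + z) = s x y + s x z"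
    "\<And>c x y. s (scaleC c x) y = c * s x y" "\<And>c x y. s x (scaleC c y) = cnj c * s x y"
    for s :: "'a \<Rightarrow> 'a \<Rightarrow> complex"
  proof -
    have e1: "s (g + h) (g + h) = s g g + s g h + s h g + s h h" by (simp add: b)
    have e2: "s (g + scaleC \<i> h) (g + scaleC \<i> h) = s g g - \<i> * s g h + \<i> * s h g + s h h"
      by (simp add: b algebra_simps)
    show ?thesis unfolding e1 e2 by (simp add: algebra_simps)
  qed
  have "2 * s1 g h = 2 * s2 g h"
    unfolding form[of s1, OF a1] form[of s2, OF a2] q ..
  then show ?thesis by simp
qed

lemma WW_add_left:
  assumes "L2fam M A" "L2fam M B"
  shows "WW M A B (f1 + f2) h = WW M A B f1 h + WW M A B f2 h"
  using WW_add_right[OF assms(2,1), of h f1 f2] by (simp add: WW_cnj[of M A B])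

lemma WW_scaleC_left: "WW M A B (scaleC c f) h = c * WW M A B f h"
  using WW_scaleC_right[of M B A h c f] by (simp add: WW_cnj[of M A B])

lemma WW_cong_AE:
  assumes A: "L2fam M A" "L2fam M A'" and B: "L2fam M B" "L2fam M B'"
    and eA: "AE \<omega> in M. A \<omega> = A' \<omega>" and eB: "AE \<omega> in M. B \<omega> = B' \<omega>"
  shows "WW M A B f h = WW M A' B' f h"
  unfolding WW_def
proof (rule integral_cong_AE)
  show "(\<lambda>\<omega>. cinner f (A \<omega>) * cinner (B \<omega>) h) \<in> borel_measurable M"
    using L2D(1)[OF A(1), of f] L2D(3)[OF B(1), of h] by measurable
  show "(\<lambda>\<omega>. cinner f (A' \<omega>) * cinner (B' \<omega>) h) \<in> borel_measurable M"
    using L2D(1)[OF A(2), of f] L2D(3)[OF B(2), of h] by measurable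
  show "AE \<omega> in M. cinner f (A \<omega>) * cinner (B \<omega>) h = cinner f (A' \<omega>) * cinner (B' \<omega>) h"
    using eA eB by eventually_elim simp
qed

lemma sqWW:
  assumes "L2fam M A"
  shows "WW M A A x x = complex_of_real (LINT \<omega>|M. (cmod (cinner x (A \<omega>)))\<^sup>2)"
proof -
  have "WW M A A x x = (CLINT \<omega>|M. complex_of_real ((cmod (cinner x (A \<omega>)))\<^sup>2))"
    unfolding WW_def
  proof (rule Bochner_Integration.integral_cong[OF refl])
    fix \<omega>
    have "cinner (A \<omega>) x = cnj (cinner x (A \<omega>))" by (rule cinner_commute)
    then show "cinner x (A \<omega>) * cinner (A \<omega>) x = complex_of_real ((cmod (cinner x (A \<omega>)))\<^sup>2)"
      by (simp only: complex_norm_square)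
  qed
  also have "\<dots> = complex_of_real (LINT \<omega>|M. (cmod (cinner x (A \<omega>)))\<^sup>2)"
    by (rule integral_complex_of_real)
  finally show ?thesis .
qed

lemma cadjoint_add:
  fixes T :: "'a::complex_hilbert_space \<Rightarrow> 'a"
  assumes "bounded_clinear T"
  shows "cadjoint T (x + y) = cadjoint T x + cadjoint T y"
  by (rule cinner_ext_right) (simp add: cadjoint_spec[OF assms, symmetric] cinner_add_right)

lemma cadjoint_scaleC:
  fixes T :: "'a::complex_hilbert_space \<Rightarrow> 'a"
  assumes "bounded_clinear T"
  shows "cadjoint T (scaleC c x) = scaleC c (cadjoint T x)"
  by (rule cinner_ext_right) (simp add: cadjoint_spec[OF assms, symmetric] cinner_scaleC_right)

theorem theorem3p6:
  fixes M :: "'o measure"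
    and K :: "'h::complex_hilbert_space \<Rightarrow> 'h"
    and F G :: "'o \<Rightarrow> 'h"
  assumes "separable_hilbert TYPE('h)"
    and "bounded_clinear K"
    and "closed (range K)"
    and "parseval_cont_K_frame M K F"
    and "dual_cont_K_bessel M K F G"
  shows "(AE \<omega> in M. G \<omega> = moore_penrose K (F \<omega>)) \<longleftrightarrow>
         (\<forall>Q. dual_cont_K_bessel M K F Q \<longrightarrow>
              analysis_adj M G \<circ> analysis_op G = analysis_adj M G \<circ> analysis_op Q)"
proof -
  note sep = assms(1) and bK = assms(2) and clR = assms(3) and parF = assms(4) and dG = assms(5)
  interpret mp: mp_setup K by unfold_locales (rule bK, rule clR)
  define Kd where "Kd = mp.Kd"
  have mpeq: "moore_penrose K = Kd" unfolding Kd_def by (rule mp.moore_penrose_eq)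
  have bKd: "bounded_clinear Kd" unfolding Kd_def by (rule mp.Kd_bclin)
  have Pself: "cinner (Kd (K x)) y = cinner x (Kd (K y))" for x y
    using mp.penrose4 unfolding Kd_def selfadjoint_op_def by simp
  have Pidem: "Kd (K (Kd y)) = Kd y" for y unfolding Kd_def by (rule mp.penrose2)
  have KKdK: "K (Kd (K x)) = K x" for x unfolding Kd_def by (rule mp.penrose1)
  define Ks where "Ks = cadjoint K"
  define Kds where "Kds = cadjoint Kd"
  have adjK: "cinner (K x) y = cinner x (Ks y)" for x y unfolding Ks_def by (rule cadjoint_spec[OF bK])
  have adjK': "cinner (Ks y) x = cinner y (K x)" for x y unfolding Ks_def by (rule cadjoint_spec'[OF bK])
  have adjKd: "cinner (Kd x) y = cinner x (Kds y)" for x y unfolding Kds_def by (rule cadjoint_spec[OF bKd])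
  have adjKd': "cinner (Kds y) x = cinner y (Kd x)" for x y unfolding Kds_def by (rule cadjoint_spec'[OF bKd])
  have KsKds: "Ks (Kds f) = Kd (K f)" for f
  proof (rule cinner_ext)
    fix y show "cinner (Ks (Kds f)) y = cinner (Kd (K f)) y"
      by (simp add: adjK' adjKd' Pself)
  qed
  have PP: "cinner (Kd (K f)) (Kd (K h)) = cinner (Kd (K f)) h" for f h
    by (simp add: Pself Pidem)
  have normP: "norm (Kd (K f)) \<le> norm f" for f
  proof -
    have "complex_of_real ((norm (Kd (K f)))\<^sup>2) = cinner (Kd (K f)) (Kd (K f))" by (simp add: cinner_self_norm)
    also have "\<dots> = cinner (Kd (K f)) f" by (rule PP)
    finally have "(norm (Kd (K f)))\<^sup>2 = cmod (cinner (Kd (K f)) f)"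
      by (metis norm_of_real abs_power2 real_norm_def)
    also have "\<dots> \<le> norm (Kd (K f)) * norm f" by (rule cauchy_schwarz)
    finally have "norm (Kd (K f)) * norm (Kd (K f)) \<le> norm (Kd (K f)) * norm f" by (simp add: power2_eq_square)
    then show ?thesis by (cases "Kd (K f) = 0") simp_all
  qed

  have wmF: "weakly_measurable M F" and parF': "\<And>f. (\<integral>\<^sup>+\<omega>. ennreal ((cmod (cinner f (F \<omega>)))\<^sup>2) \<partial>M) = ennreal ((norm (Ks f))\<^sup>2)"
    using parF unfolding parseval_cont_K_frame_def Ks_def by blast+
  have L2F: "L2fam M F" unfolding L2fam_def using wmF parF' unfolding weakly_measurable_def by simp
  have intF: "(LINT \<omega>|M. (cmod (cinner f (F \<omega>)))\<^sup>2) = (norm (Ks f))\<^sup>2" for f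
  proof -
    have "ennreal (LINT \<omega>|M. (cmod (cinner f (F \<omega>)))\<^sup>2) = (\<integral>\<^sup>+\<omega>. ennreal ((cmod (cinner f (F \<omega>)))\<^sup>2) \<partial>M)"
      by (rule nn_integral_eq_integral[symmetric, OF sq_integrable[OF L2D(1)[OF L2F] L2D(2)[OF L2F]]]) simp
    then show ?thesis unfolding parF' by simp
  qed
  have PF: "WW M F F g h = cinner (Ks g) (Ks h)" for g h
  proof (rule polarization[of "WW M F F" "\<lambda>x y. cinner (Ks x) (Ks y)"])
    show "WW M F F (x + y) z = WW M F F x z + WW M F F y z" for x y z by (rule WW_add_left[OF L2F L2F])
    show "WW M F F x (y + z) = WW M F F x y + WW M F F x z" for x y z by (rule WW_add_right[OF L2F L2F])
    show "WW M F F (scaleC c x) y = c * WW M F F x y" for c x y by (rule WW_scaleC_left)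
    show "WW M F F x (scaleC c y) = cnj c * WW M F F x y" for c x y by (rule WW_scaleC_right)
    show "cinner (Ks (x + y)) (Ks z) = cinner (Ks x) (Ks z) + cinner (Ks y) (Ks z)" for x y z
      unfolding Ks_def by (simp add: cadjoint_add[OF bK] cinner_add_left)
    show "cinner (Ks x) (Ks (y + z)) = cinner (Ks x) (Ks y) + cinner (Ks x) (Ks z)" for x y z
      unfolding Ks_def by (simp add: cadjoint_add[OF bK] cinner_add_right)
    show "cinner (Ks (scaleC c x)) (Ks y) = c * cinner (Ks x) (Ks y)" for c x y
      unfolding Ks_def by (simp add: cadjoint_scaleC[OF bK] cinner_scaleC_left)
    show "cinner (Ks x) (Ks (scaleC c y)) = cnj c * cinner (Ks x) (Ks y)" for c x y
      unfolding Ks_def by (simp add: cadjoint_scaleC[OF bK] cinner_scaleC_right)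
    show "WW M F F x x = cinner (Ks x) (Ks x)" for x
      by (simp add: sqWW[OF L2F] intF cinner_self_norm)
  qed

  define P where "P \<omega> = Kd (F \<omega>)" for \<omega>
  have Pin: "cinner f (P \<omega>) = cinner (Kds f) (F \<omega>)" for f \<omega> unfolding P_def by (simp add: adjKd')
  have Pin2: "cinner (P \<omega>) h = cinner (F \<omega>) (Kds h)" for h \<omega> unfolding P_def by (rule adjKd)
  have L2P: "L2fam M P" unfolding L2fam_def Pin using L2D(1,2)[OF L2F] by simp
  have WPl: "WW M P B f h = WW M F B (Kds f) h" for B f h unfolding WW_def Pin ..
  have WPr: "WW M A P f h = WW M A F f (Kds h)" for A f h unfolding WW_def Pin2 ..
  have Pbound: "(\<integral>\<^sup>+\<omega>. ennreal ((cmod (cinner f (P \<omega>)))\<^sup>2) \<partial>M) \<le> ennreal (1 * (norm f)\<^sup>2)" for f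
  proof -
    have "(\<integral>\<^sup>+\<omega>. ennreal ((cmod (cinner f (P \<omega>)))\<^sup>2) \<partial>M) = ennreal ((norm (Kd (K f)))\<^sup>2)"
      unfolding Pin parF' KsKds ..
    also have "\<dots> \<le> ennreal (1 * (norm f)\<^sup>2)"
      by (rule ennreal_leI) (simp add: power_mono normP)
    finally show ?thesis .
  qed
  have dualP: "dual_cont_K_bessel M K F P"
    unfolding dual_cont_K_bessel_def cont_bessel_def
  proof (intro conjI allI)
    show "weakly_measurable M P" unfolding weakly_measurable_def using L2D(1)[OF L2P] by blast
    show "\<exists>B>0. \<forall>f. (\<integral>\<^sup>+\<omega>. ennreal ((cmod (cinner f (P \<omega>)))\<^sup>2) \<partial>M) \<le> ennreal (B * (norm f)\<^sup>2)"
      using Pbound by (intro exI[of _ 1]) simp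
    fix f h
    have "(LINT \<omega>|M. cinner f (P \<omega>) * cinner (F \<omega>) h) = WW M P F f h" unfolding WW_def ..
    also have "\<dots> = WW M F F (Kds f) h" by (rule WPl)
    also have "\<dots> = cinner (Kd (K f)) (Ks h)" by (simp add: PF KsKds)
    also have "\<dots> = cinner (K f) h" by (simp add: adjK[symmetric] KKdK)
    finally show "cinner (K f) h = (LINT \<omega>|M. cinner f (P \<omega>) * cinner (F \<omega>) h)" by simp
  qed

  have bG: "cont_bessel M G" and dualG: "\<And>f h. cinner (K f) h = WW M G F f h"
    using dG unfolding dual_cont_K_bessel_def WW_def by blast+
  have L2G: "L2fam M G" by (rule bessel_L2[OF bG])
  obtain BG where BG: "BG > 0" "\<And>f. (\<integral>\<^sup>+\<omega>. ennreal ((cmod (cinner f (G \<omega>)))\<^sup>2) \<partial>M) \<le> ennreal (BG * (norm f)\<^sup>2)"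
    using bG unfolding cont_bessel_def by blast
  have adjG: "cinner (analysis_adj M G (analysis_op A f)) h = WW M A G f h" if "L2fam M A" for A f h
    by (rule adj_char[OF that L2G BG(2)]) (use BG(1) in simp)

  have WPG: "WW M P G f h = cinner (Kd (K f)) h" for f h
  proof -
    have "WW M P G f h = cnj (WW M G F h (Kds f))" by (simp add: WPl WW_cnj[of M F G])
    also have "\<dots> = cnj (cinner (Kd (K h)) f)" by (simp add: dualG[symmetric] adjKd)
    also have "\<dots> = cinner (Kd (K f)) h" by (simp add: Pself cinner_commute[of f])
    finally show ?thesis .
  qed
  have WPP: "WW M P P f h = cinner (Kd (K f)) h" for f h
    by (simp add: WPl WPr PF KsKds PP)
  have WQP: "WW M Q P f h = cinner (Kd (K f)) h" if "dual_cont_K_bessel M K F Q" for Q f h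
  proof -
    have "WW M Q P f h = WW M Q F f (Kds h)" by (rule WPr)
    also have "\<dots> = cinner (K f) (Kds h)" using that unfolding dual_cont_K_bessel_def WW_def by simp
    also have "\<dots> = cinner (Kd (K f)) h" by (simp add: adjKd)
    finally show ?thesis .
  qed

  show ?thesis
  proof
    assume ae: "AE \<omega> in M. G \<omega> = moore_penrose K (F \<omega>)"
    then have aeP: "AE \<omega> in M. G \<omega> = P \<omega>" unfolding mpeq P_def .
    show "\<forall>Q. dual_cont_K_bessel M K F Q \<longrightarrow>
              analysis_adj M G \<circ> analysis_op G = analysis_adj M G \<circ> analysis_op Q"
    proof (intro allI impI ext)
      fix Q f assume dQ: "dual_cont_K_bessel M K F Q"
      have L2Q: "L2fam M Q" by (rule bessel_L2) (use dQ in \<open>simp add: dual_cont_K_bessel_def\<close>)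
      show "(analysis_adj M G \<circ> analysis_op G) f = (analysis_adj M G \<circ> analysis_op Q) f"
        unfolding comp_def
      proof (rule cinner_ext)
        fix h
        have "cinner (analysis_adj M G (analysis_op G f)) h = WW M G G f h" by (rule adjG[OF L2G])
        also have "\<dots> = WW M P P f h" by (rule WW_cong_AE[OF L2G L2P L2G L2P aeP aeP])
        also have "\<dots> = cinner (Kd (K f)) h" by (rule WPP)
        also have "\<dots> = WW M Q P f h" by (rule WQP[OF dQ, symmetric])
        also have "\<dots> = WW M Q G f h" by (rule WW_cong_AE[OF L2Q L2Q L2P L2G AE_I2[OF refl]]) (use aeP in auto)
        also have "\<dots> = cinner (analysis_adj M G (analysis_op Q f)) h" by (rule adjG[OF L2Q, symmetric])
        finally show "cinner (analysis_adj M G (analysis_op G f)) h = cinner (analysis_adj M G (analysis_op Q f)) h" .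
      qed
    qed
  next
    assume H: "\<forall>Q. dual_cont_K_bessel M K F Q \<longrightarrow>
              analysis_adj M G \<circ> analysis_op G = analysis_adj M G \<circ> analysis_op Q"
    then have HP: "analysis_adj M G (analysis_op G f) = analysis_adj M G (analysis_op P f)" for f
      using dualP by (metis comp_apply)
    have WGG: "WW M G G f h = cinner (Kd (K f)) h" for f h
      using HP[of f] adjG[OF L2G, of f h] adjG[OF L2P, of f h] WPG by simp
    have WGP: "WW M G P f h = cinner (Kd (K f)) h" for f h
      by (simp add: WW_cnj[of M G P] WPG Pself cinner_commute[of f])
    have aef: "AE \<omega> in M. cinner f (G \<omega>) = cinner f (P \<omega>)" for f
    proof -
      define u where "u \<omega> = cinner f (G \<omega>)" for \<omega>
      define v where "v \<omega> = cinner f (P \<omega>)" for \<omega>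
      have cu: "cinner (G \<omega>) f = cnj (u \<omega>)" for \<omega> unfolding u_def by (rule cinner_commute)
      have cv: "cinner (P \<omega>) f = cnj (v \<omega>)" for \<omega> unfolding v_def by (rule cinner_commute)
      have i1: "integrable M (\<lambda>\<omega>. u \<omega> * cnj (u \<omega>))" using WW_integrable[OF L2G L2G, of f f] unfolding u_def cu[unfolded u_def, symmetric] .
      have i2: "integrable M (\<lambda>\<omega>. u \<omega> * cnj (v \<omega>))" using WW_integrable[OF L2G L2P, of f f] unfolding u_def v_def cv[unfolded v_def, symmetric] .
      have i3: "integrable M (\<lambda>\<omega>. v \<omega> * cnj (u \<omega>))" using WW_integrable[OF L2P L2G, of f f] unfolding u_def v_def cu[unfolded u_def, symmetric] .
      have i4: "integrable M (\<lambda>\<omega>. v \<omega> * cnj (v \<omega>))" using WW_integrable[OF L2P L2P, of f f] unfolding v_def cv[unfolded v_def, symmetric] .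
      have pt: "complex_of_real ((cmod (u \<omega> - v \<omega>))\<^sup>2) = u \<omega> * cnj (u \<omega>) - u \<omega> * cnj (v \<omega>) - (v \<omega> * cnj (u \<omega>) - v \<omega> * cnj (v \<omega>))" for \<omega>
        unfolding complex_norm_square by (simp add: algebra_simps)
      have icx: "integrable M (\<lambda>\<omega>. complex_of_real ((cmod (u \<omega> - v \<omega>))\<^sup>2))"
        unfolding pt using i1 i2 i3 i4 by simp
      then have ir: "integrable M (\<lambda>\<omega>. (cmod (u \<omega> - v \<omega>))\<^sup>2)" by (simp only: complex_of_real_integrable_eq)
      have "complex_of_real (LINT \<omega>|M. (cmod (u \<omega> - v \<omega>))\<^sup>2) = (CLINT \<omega>|M. complex_of_real ((cmod (u \<omega> - v \<omega>))\<^sup>2))"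
        by (rule integral_complex_of_real[symmetric])
      also have "\<dots> = (CLINT \<omega>|M. u \<omega> * cnj (u \<omega>)) - (CLINT \<omega>|M. u \<omega> * cnj (v \<omega>)) - ((CLINT \<omega>|M. v \<omega> * cnj (u \<omega>)) - (CLINT \<omega>|M. v \<omega> * cnj (v \<omega>)))"
        unfolding pt using i1 i2 i3 i4 by simp
      also have "(CLINT \<omega>|M. u \<omega> * cnj (u \<omega>)) = WW M G G f f" unfolding WW_def u_def cu[unfolded u_def, symmetric] ..
      also have "(CLINT \<omega>|M. u \<omega> * cnj (v \<omega>)) = WW M G P f f" unfolding WW_def u_def v_def cv[unfolded v_def, symmetric] ..
      also have "(CLINT \<omega>|M. v \<omega> * cnj (u \<omega>)) = WW M P G f f" unfolding WW_def u_def v_def cu[unfolded u_def, symmetric] ..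
      also have "(CLINT \<omega>|M. v \<omega> * cnj (v \<omega>)) = WW M P P f f" unfolding WW_def v_def cv[unfolded v_def, symmetric] ..
      finally have "complex_of_real (LINT \<omega>|M. (cmod (u \<omega> - v \<omega>))\<^sup>2) = 0"
        by (simp add: WGG WGP WPG WPP)
      then have "(LINT \<omega>|M. (cmod (u \<omega> - v \<omega>))\<^sup>2) = 0" by simp
      then have "AE \<omega> in M. (cmod (u \<omega> - v \<omega>))\<^sup>2 = 0"
        using integral_nonneg_eq_0_iff_AE[OF ir] by simp
      then show ?thesis unfolding u_def v_def by eventually_elim simp
    qed
    obtain D :: "'h set" where D: "countable D" "closure D = UNIV"
      using sep unfolding separable_hilbert_def separable_space_def euclidean_closure_of by auto
    have "AE \<omega> in M. \<forall>d\<in>D. cinner d (G \<omega>) = cinner d (P \<omega>)"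
      using aef by (simp add: AE_ball_countable[OF D(1)])
    then have "AE \<omega> in M. G \<omega> = P \<omega>"
    proof eventually_elim
      case (elim \<omega>)
      define z where "z = G \<omega> - P \<omega>"
      have zD: "cinner d z = 0" if "d \<in> D" for d using elim that by (simp add: z_def cinner_diff_right)
      show "G \<omega> = P \<omega>"
      proof (rule ccontr)
        assume "G \<omega> \<noteq> P \<omega>"
        then have z0: "norm z > 0" by (simp add: z_def)
        have "z \<in> closure D" using D(2) by simp
        then obtain d where d: "d \<in> D" "dist d z < norm z / 2"
          unfolding closure_approachable using z0 by (meson half_gt_zero)
        have "cinner z z = cinner (z - d) z" using zD[OF d(1)] by (simp add: cinner_diff_left)
        then have "(norm z)\<^sup>2 = cmod (cinner (z - d) z)"
          by (metis cinner_self_norm norm_of_real abs_power2 real_norm_def)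
        also have "\<dots> \<le> norm (z - d) * norm z" by (rule cauchy_schwarz)
        also have "\<dots> < norm z / 2 * norm z"
          using d(2) z0 by (simp add: dist_norm norm_minus_commute)
        finally show False by (simp add: power2_eq_square)
      qed
    qed
    then show "AE \<omega> in M. G \<omega> = moore_penrose K (F \<omega>)" unfolding mpeq P_def .
  qed
qed

end
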